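(* Assume $C^\top C\succ0$, and let $\gamma>0$, $\sigma>0$, $\lambda>0$. Let $X_r=(\widetilde W_r,y_r)$, $r\ge0$, be generated by the alternating scheme of the context from a feasible initial point $\widetilde W_0\in\mathcal{X}_1$, $y_0\in\mathbb{R}^{mn}_+$. Then every cluster point $z=(z_1,z_2)$ of $(X_r)$ is a coordinatewise minimizer of $\widehat H_\sigma$ with respect to the blocks $\widetilde W\in\mathbb{R}^{p^2}$ and $y\in\mathbb{R}^{mn}$, i.e. $\widehat H_\sigma(z_1+d_1,z_2)\ge\widehat H_\sigma(z)$ for all $d_1$ with $(z_1+d_1,z_2)\in\operatorname{dom}\widehat H_\sigma$, and $\widehat H_\sigma(z_1,z_2+d_2)\ge\widehat H_\sigma(z)$ for all $d_2$ with $(z_1,z_2+d_2)\in\operatorname{dom}\widehat H_\sigma$. If in addition $\widehat H_\sigma$ is regular at $z$, then $z$ is a stationary point of $\widehat H_\sigma$.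
   Context: Let $n,m,M\ge1$, $p=m+n$. For $i=1,\dots,M$ let $A_i\in\mathbb{R}^{n\times n}$, $B_{2,i}\in\mathbb{R}^{n\times m}$, $F_i=\begin{bmatrix}A_i&B_{2,i}\\0&0\end{bmatrix}$. Let $B_1\in\mathbb{R}^{n\times l}$, $C\in\mathbb{R}^{q\times n}$, $D\in\mathbb{R}^{q\times m}$ with $C^\top D=0$, $D^\top D\succ0$, $B_1B_1^\top\succ0$; $Q=\begin{bmatrix}B_1B_1^\top&0\\0&0\end{bmatrix}$, $R=\begin{bmatrix}C^\top C&0\\0&D^\top D\end{bmatrix}$, $V_1=[0,\ I_m]$, $V_2=[I_n,\ 0]$, $\Psi_i(W)=-V_2(F_iW+WF_i^\top+Q)V_2^\top$. $\mathrm{vec}$ is column-stacking; $\mathcal{P}:=V_2\otimes V_1$, so $\mathcal{P}\,\mathrm{vec}(W)=\mathrm{vec}(V_1WV_2^\top)$. $\Gamma^k_+=\{\mathrm{vec}(X):X\in\mathbb{S}^k_+\}$, $\delta_S$ the indicator of $S$, $\Omega=\{\mathrm{vec}(W):W_{ij}=0,\ 1\le i<j\le n\}$, $\mathcal{X}_1=\{\mathrm{vec}(W)\in\Gamma^p_+:\mathrm{vec}(\Psi_i(W))\in\Gamma^n_+\ \forall i,\ \mathrm{vec}(W)\in\Omega\}$, $r_1(\widetilde W)=\langle\mathrm{vec}(R),\widetilde W\rangle+\delta_{\mathcal{X}_1}(\widetilde W)$. For $x\in\mathbb{R}^{mn}$, $f_\sigma(x)=\sum_\ell(1-e^{-x_\ell/\sigma})$,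 $g_\sigma=-f_\sigma$, $g_\sigma^*$ its convex conjugate; $|\cdot|$ componentwise. Define $\widehat H_\sigma(\widetilde W,y)=r_1(\widetilde W)+\gamma g^*_\sigma(-y)+\gamma y^\top|\mathcal{P}\widetilde W|+\delta_{\mathbb{R}^{mn}_+}(y)$. Scheme: for $r=1,2,\dots$: if $r$ is odd, $\widetilde W_r=\widetilde W_{r-1}$ and $y_r=\operatorname{argmin}_{y\in\mathbb{R}^{mn}_+}\{\gamma g_\sigma^*(-y)+\gamma y^\top|\mathcal{P}\widetilde W_{r-1}|\}=\nabla f_\sigma(|\mathcal{P}\widetilde W_{r-1}|)$; if $r$ is even, $y_r=y_{r-1}$ and $\widetilde W_r\in\operatorname{argmin}_{\widetilde W\in\mathcal{X}_1}\{\langle\mathrm{vec}(R),\widetilde W\rangle+\gamma y_{r-1}^\top|\mathcal{P}\widetilde W|+\frac1{2\lambda}\|\widetilde W-\widetilde W_{r-1}\|^2\}$. Definitions: for $\phi$ on a convex set $\mathcal{D}$, $\phi'(z;d)=\liminf_{t\downarrow0}\frac{\phi(z+td)-\phi(z)}{t}$; $z$ is a stationary point if $\phi'(z;d)\ge0$ for all $d$ with $z+d\in\mathcal{D}$ (here $\mathcal{D}=\mathcal{X}_1\times\mathbb{R}^{mn}_+$). $\widehat H_\sigma$ is regular at $z$ (w.r.t. the two blocks) if $\widehat H_\sigma'(z;d)\ge0$ for every $d=(d_1,d_2)$ such that $\widehat H_\sigma'(z;(d_1,0))\ge0$ and $\widehat H_\sigma'(z;(0,d_2))\ge0$. *)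

theory Defs
  imports "Jordan_Normal_Form.Matrix" "HOL-Library.Extended_Real" "HOL-Library.Liminf_Limsup"
begin

(* Conventions: vectors are JNF 'real vec', matrices 'real mat'; indices are 0-based
   (the paper's 1-based index i corresponds to i-1 here). p = m + n. *)

definition psd :: "nat \<Rightarrow> real mat \<Rightarrow> bool" where
  "psd k X \<longleftrightarrow> X \<in> carrier_mat k k \<and> X\<^sup>T = X \<and> (\<forall>x\<in>carrier_vec k. 0 \<le> x \<bullet> (X *\<^sub>v x))"

definition pd :: "nat \<Rightarrow> real mat \<Rightarrow> bool" where
  "pd k X \<longleftrightarrow> X \<in> carrier_mat k k \<and> X\<^sup>T = X \<and>
     (\<forall>x\<in>carrier_vec k. x \<noteq> 0\<^sub>v k \<longrightarrow> 0 < x \<bullet> (X *\<^sub>v x))"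

definition vecm :: "real mat \<Rightarrow> real vec" where
  "vecm X = vec (dim_row X * dim_col X) (\<lambda>k. X $$ (k mod dim_row X, k div dim_row X))"

definition Gamma_plus :: "nat \<Rightarrow> real vec set" where
  "Gamma_plus k = vecm ` {X. psd k X}"

definition kron :: "real mat \<Rightarrow> real mat \<Rightarrow> real mat" where
  "kron A B = mat (dim_row A * dim_row B) (dim_col A * dim_col B)
     (\<lambda>(i,j). A $$ (i div dim_row B, j div dim_col B) * B $$ (i mod dim_row B, j mod dim_col B))"

text \<open>V1 = [0, I_m] (m x p), V2 = [I_n, 0] (n x p)\<close>
definition V1 :: "nat \<Rightarrow> nat \<Rightarrow> real mat" where
  "V1 n m = mat m (m + n) (\<lambda>(i,j). if j = n + i then 1 else 0)"

definition V2 :: "nat \<Rightarrow> nat \<Rightarrow> real mat" where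
  "V2 n m = mat n (m + n) (\<lambda>(i,j). if j = i then 1 else 0)"

definition Pop :: "nat \<Rightarrow> nat \<Rightarrow> real mat" where
  "Pop n m = kron (V2 n m) (V1 n m)"

definition Fm :: "nat \<Rightarrow> nat \<Rightarrow> real mat \<Rightarrow> real mat \<Rightarrow> real mat" where
  "Fm n m A B2 = four_block_mat A B2 (0\<^sub>m m n) (0\<^sub>m m m)"

definition Qm :: "nat \<Rightarrow> nat \<Rightarrow> real mat \<Rightarrow> real mat" where
  "Qm n m B1 = four_block_mat (B1 * B1\<^sup>T) (0\<^sub>m n m) (0\<^sub>m m n) (0\<^sub>m m m)"

definition Rm :: "nat \<Rightarrow> nat \<Rightarrow> real mat \<Rightarrow> real mat \<Rightarrow> real mat" where
  "Rm n m C D = four_block_mat (C\<^sup>T * C) (0\<^sub>m n m) (0\<^sub>m m n) (D\<^sup>T * D)"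

definition Psi :: "nat \<Rightarrow> nat \<Rightarrow> real mat \<Rightarrow> real mat \<Rightarrow> real mat \<Rightarrow> real mat \<Rightarrow> real mat" where
  "Psi n m A B2 B1 W =
     - (V2 n m * (Fm n m A B2 * W + W * (Fm n m A B2)\<^sup>T + Qm n m B1) * (V2 n m)\<^sup>T)"

definition Omega :: "nat \<Rightarrow> nat \<Rightarrow> real vec set" where
  "Omega n m = {vecm W | W. W \<in> carrier_mat (m + n) (m + n) \<and>
                   (\<forall>i j. i < j \<and> j < n \<longrightarrow> W $$ (i, j) = 0)}"

text \<open>X_1; the family A_i, B_{2,i} is indexed by i in {1..M}\<close>
definition X1 :: "nat \<Rightarrow> nat \<Rightarrow> nat \<Rightarrow> (nat \<Rightarrow> real mat) \<Rightarrow> (nat \<Rightarrow> real mat) \<Rightarrow> real mat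
    \<Rightarrow> real vec set" where
  "X1 n m M A B2 B1 = {vecm W | W. W \<in> carrier_mat (m + n) (m + n) \<and> vecm W \<in> Gamma_plus (m + n) \<and>
       (\<forall>i\<in>{1..M}. vecm (Psi n m (A i) (B2 i) B1 W) \<in> Gamma_plus n) \<and> vecm W \<in> Omega n m}"

definition nonneg_orthant :: "nat \<Rightarrow> real vec set" where
  "nonneg_orthant k = {y \<in> carrier_vec k. \<forall>i<k. 0 \<le> y $ i}"

definition vabs :: "real vec \<Rightarrow> real vec" where
  "vabs v = map_vec abs v"

definition fsig :: "real \<Rightarrow> real vec \<Rightarrow> real" where
  "fsig \<sigma> x = (\<Sum>l<dim_vec x. 1 - exp (- x $ l / \<sigma>))"

definition gsig :: "real \<Rightarrow> real vec \<Rightarrow> real" where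
  "gsig \<sigma> x = - fsig \<sigma> x"

definition conj_fun :: "nat \<Rightarrow> (real vec \<Rightarrow> real) \<Rightarrow> real vec \<Rightarrow> ereal" where
  "conj_fun N g u = (SUP x\<in>carrier_vec N. ereal (u \<bullet> x - g x))"

definition r1 :: "nat \<Rightarrow> nat \<Rightarrow> nat \<Rightarrow> (nat \<Rightarrow> real mat) \<Rightarrow> (nat \<Rightarrow> real mat) \<Rightarrow> real mat
    \<Rightarrow> real mat \<Rightarrow> real mat \<Rightarrow> real vec \<Rightarrow> ereal" where
  "r1 n m M A B2 B1 C D w =
     ereal (vecm (Rm n m C D) \<bullet> w) + (if w \<in> X1 n m M A B2 B1 then 0 else \<infinity>)"

definition Hhat :: "nat \<Rightarrow> nat \<Rightarrow> nat \<Rightarrow> (nat \<Rightarrow> real mat) \<Rightarrow> (nat \<Rightarrow> real mat) \<Rightarrow> real mat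
    \<Rightarrow> real mat \<Rightarrow> real mat \<Rightarrow> real \<Rightarrow> real \<Rightarrow> real vec \<times> real vec \<Rightarrow> ereal" where
  "Hhat n m M A B2 B1 C D \<gamma> \<sigma> z =
     r1 n m M A B2 B1 C D (fst z)
     + ereal \<gamma> * conj_fun (m * n) (gsig \<sigma>) (- snd z)
     + ereal (\<gamma> * (snd z \<bullet> vabs (Pop n m *\<^sub>v fst z)))
     + (if snd z \<in> nonneg_orthant (m * n) then 0 else \<infinity>)"

definition dir_deriv :: "(real vec \<times> real vec \<Rightarrow> ereal) \<Rightarrow> real vec \<times> real vec
    \<Rightarrow> real vec \<times> real vec \<Rightarrow> ereal" where
  "dir_deriv \<phi> z d = Liminf (at_right 0)
     (\<lambda>t. (\<phi> (fst z + t \<cdot>\<^sub>v fst d, snd z + t \<cdot>\<^sub>v snd d) - \<phi> z) / ereal t)"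

definition stationary :: "(real vec \<times> real vec \<Rightarrow> ereal) \<Rightarrow> (real vec \<times> real vec) set
    \<Rightarrow> real vec \<times> real vec \<Rightarrow> bool" where
  "stationary \<phi> Dom z \<longleftrightarrow>
     (\<forall>d. (fst z + fst d, snd z + snd d) \<in> Dom \<longrightarrow> 0 \<le> dir_deriv \<phi> z d)"

definition regular_at :: "(real vec \<times> real vec \<Rightarrow> ereal) \<Rightarrow> nat \<Rightarrow> nat
    \<Rightarrow> real vec \<times> real vec \<Rightarrow> bool" where
  "regular_at \<phi> N1 N2 z \<longleftrightarrow>
     (\<forall>d1\<in>carrier_vec N1. \<forall>d2\<in>carrier_vec N2.
        0 \<le> dir_deriv \<phi> z (d1, 0\<^sub>v N2) \<and> 0 \<le> dir_deriv \<phi> z (0\<^sub>v N1, d2)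
        \<longrightarrow> 0 \<le> dir_deriv \<phi> z (d1, d2))"

definition edom :: "('a \<Rightarrow> ereal) \<Rightarrow> 'a set" where
  "edom \<phi> = {x. \<phi> x < \<infinity>}"

end

theory Submission
  imports Defs
begin


definition unvec :: "nat \<Rightarrow> real vec \<Rightarrow> real mat" where
  "unvec k w = mat k k (\<lambda>(i,j). w $ (i + j * k))"

lemma dim_vecm[simp]: "dim_vec (vecm X) = dim_row X * dim_col X"
  by (simp add: vecm_def)

lemma index_vecm: "i < dim_row X * dim_col X \<Longrightarrow> vecm X $ i = X $$ (i mod dim_row X, i div dim_row X)"
  by (simp add: vecm_def)

lemma unvec_carrier[simp]: "unvec k w \<in> carrier_mat k k"
  by (simp add: unvec_def)

lemma dim_unvec[simp]: "dim_row (unvec k w) = k" "dim_col (unvec k w) = k"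
  by (simp_all add: unvec_def)

lemma index_unvec[simp]: "i < k \<Longrightarrow> j < k \<Longrightarrow> unvec k w $$ (i,j) = w $ (i + j * k)"
  by (simp add: unvec_def)

lemma idx_lt: "i < k \<Longrightarrow> j < k \<Longrightarrow> i + j * k < k * (k::nat)"
proof -
  assume "i < k" "j < k"
  then have "i + j * k < k + j * k" by simp
  also have "\<dots> = (Suc j) * k" by simp
  also have "\<dots> \<le> k * k" using \<open>j < k\<close> by (metis Suc_leI mult.commute mult_le_mono2)
  finally show ?thesis .
qed

lemma unvec_vecm: "W \<in> carrier_mat k k \<Longrightarrow> unvec k (vecm W) = W"
  apply (rule eq_matI)
  using idx_lt by (auto simp: index_vecm)

lemma vecm_unvec: "w \<in> carrier_vec (k*k) \<Longrightarrow> vecm (unvec k w) = w"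
proof (rule eq_vecI)
  fix i assume w: "w \<in> carrier_vec (k*k)" and i: "i < dim_vec w"
  then have ik: "i < k * k" by simp
  then have k: "0 < k" by (metis mult_0 not_gr0 not_less_zero)
  have "i mod k < k" using k by simp
  moreover have "i div k < k" using ik by (simp add: less_mult_imp_div_less)
  ultimately show "vecm (unvec k w) $ i = w $ i"
    using ik by (simp add: index_vecm)
qed (simp)

lemma vecm_inj: "W \<in> carrier_mat k k \<Longrightarrow> V \<in> carrier_mat k k \<Longrightarrow> vecm W = vecm V \<Longrightarrow> W = V"
  by (metis unvec_vecm)

lemma Gamma_plus_iff: "X \<in> carrier_mat k k \<Longrightarrow> vecm X \<in> Gamma_plus k \<longleftrightarrow> psd k X"
  proof
  assume X: "X \<in> carrier_mat k k" and "vecm X \<in> Gamma_plus k"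
  then obtain Y where "psd k Y" "vecm X = vecm Y" unfolding Gamma_plus_def by auto
  moreover then have "Y \<in> carrier_mat k k" unfolding psd_def by simp
  ultimately show "psd k X" using X vecm_inj by metis
qed (auto simp: Gamma_plus_def)

lemma Psi_carrier: "Psi n m A B2 B1 W \<in> carrier_mat n n"
proof (rule carrier_matI)
  show "dim_row (Psi n m A B2 B1 W) = n" unfolding Psi_def V2_def by simp
  show "dim_col (Psi n m A B2 B1 W) = n" unfolding Psi_def V2_def by simp
qed

definition good :: "nat \<Rightarrow> nat \<Rightarrow> nat \<Rightarrow> (nat \<Rightarrow> real mat) \<Rightarrow> (nat \<Rightarrow> real mat) \<Rightarrow> real mat \<Rightarrow> real mat \<Rightarrow> bool" where
  "good n m M A B2 B1 W \<longleftrightarrow> psd (m+n) W \<and> (\<forall>i\<in>{1..M}. psd n (Psi n m (A i) (B2 i) B1 W))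
     \<and> (\<forall>i j. i < j \<and> j < n \<longrightarrow> W $$ (i, j) = 0)"

lemma X1_iff: "w \<in> X1 n m M A B2 B1 \<longleftrightarrow> w \<in> carrier_vec ((m+n)*(m+n)) \<and> good n m M A B2 B1 (unvec (m+n) w)"
proof
  assume "w \<in> X1 n m M A B2 B1"
  then obtain W where W: "w = vecm W" "W \<in> carrier_mat (m + n) (m + n)" "vecm W \<in> Gamma_plus (m + n)"
       "\<forall>i\<in>{1..M}. vecm (Psi n m (A i) (B2 i) B1 W) \<in> Gamma_plus n" "vecm W \<in> Omega n m"
    using \<open>w \<in> X1 n m M A B2 B1\<close> unfolding X1_def mem_Collect_eq by auto
  from W(5) obtain W' where W': "vecm W = vecm W'" "W' \<in> carrier_mat (m + n) (m + n)"
     "\<forall>i j. i < j \<and> j < n \<longrightarrow> W' $$ (i, j) = 0" unfolding Omega_def mem_Collect_eq by auto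
  have eq: "W' = W" using W'(1,2) W(2) vecm_inj by metis
  have u: "unvec (m+n) w = W" using W(1,2) unvec_vecm by metis
  have c: "w \<in> carrier_vec ((m+n)*(m+n))" unfolding W(1) using carrier_matD[OF W(2)] by (intro carrier_vecI) simp
  have g1: "psd (m+n) W" using W(2,3) Gamma_plus_iff by blast
  have g2: "\<forall>i\<in>{1..M}. psd n (Psi n m (A i) (B2 i) B1 W)" using W(4) Gamma_plus_iff[OF Psi_carrier] by blast
  show "w \<in> carrier_vec ((m+n)*(m+n)) \<and> good n m M A B2 B1 (unvec (m+n) w)"
    unfolding good_def u using c g1 g2 W'(3) eq by simp
next
  assume a: "w \<in> carrier_vec ((m+n)*(m+n)) \<and> good n m M A B2 B1 (unvec (m+n) w)"
  let ?W = "unvec (m+n) w"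
  have w: "w = vecm ?W" using a vecm_unvec by metis
  have c: "?W \<in> carrier_mat (m+n) (m+n)" by simp
  have g: "psd (m+n) ?W" "\<forall>i\<in>{1..M}. psd n (Psi n m (A i) (B2 i) B1 ?W)"
     "\<forall>i j. i < j \<and> j < n \<longrightarrow> ?W $$ (i, j) = 0" using a unfolding good_def by blast+
  have o: "vecm ?W \<in> Omega n m" unfolding Omega_def mem_Collect_eq using c g(3) by auto
  have g1: "vecm ?W \<in> Gamma_plus (m+n)" using g(1) Gamma_plus_iff[OF c] by blast
  have g2: "\<forall>i\<in>{1..M}. vecm (Psi n m (A i) (B2 i) B1 ?W) \<in> Gamma_plus n"
    using g(2) Gamma_plus_iff[OF Psi_carrier] by blast
  show "w \<in> X1 n m M A B2 B1" unfolding X1_def mem_Collect_eq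
    apply (rule exI[of _ ?W])
    using w c g1 g2 o by simp
qed


lemma quad_form: "X \<in> carrier_mat k k \<Longrightarrow> x \<in> carrier_vec k \<Longrightarrow>
   x \<bullet> (X *\<^sub>v x) = (\<Sum>i=0..<k. x $ i * (\<Sum>j=0..<k. X $$ (i,j) * x $ j))"
proof -
  assume X: "X \<in> carrier_mat k k" and x: "x \<in> carrier_vec k"
  have "x \<bullet> (X *\<^sub>v x) = (\<Sum>i=0..<k. x $ i * (X *\<^sub>v x) $ i)"
    unfolding scalar_prod_def using X by simp
  also have "\<dots> = (\<Sum>i=0..<k. x $ i * (\<Sum>j=0..<k. X $$ (i,j) * x $ j))"
  proof (intro sum.cong refl)
    fix i assume i: "i \<in> {0..<k}"
    have "(X *\<^sub>v x) $ i = row X i \<bullet> x" using X i by simp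
    also have "\<dots> = (\<Sum>j=0..<k. X $$ (i,j) * x $ j)"
      unfolding scalar_prod_def using X x i by (intro sum.cong) auto
    finally show "x $ i * (X *\<^sub>v x) $ i = x $ i * (\<Sum>j=0..<k. X $$ (i,j) * x $ j)" by simp
  qed
  finally show ?thesis .
qed

lemma psd_iff: "psd k X \<longleftrightarrow> X \<in> carrier_mat k k \<and> (\<forall>i<k. \<forall>j<k. X $$ (j,i) = X $$ (i,j)) \<and>
   (\<forall>x\<in>carrier_vec k. 0 \<le> (\<Sum>i=0..<k. x $ i * (\<Sum>j=0..<k. X $$ (i,j) * x $ j)))"
proof -
  have "X \<in> carrier_mat k k \<Longrightarrow> X\<^sup>T = X \<longleftrightarrow> (\<forall>i<k. \<forall>j<k. X $$ (j,i) = X $$ (i,j))"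
  proof
    assume X: "X \<in> carrier_mat k k" and "X\<^sup>T = X"
    then show "\<forall>i<k. \<forall>j<k. X $$ (j,i) = X $$ (i,j)"
      by (metis carrier_matD(1,2) index_transpose_mat(1))
  next
    assume X: "X \<in> carrier_mat k k" and "\<forall>i<k. \<forall>j<k. X $$ (j,i) = X $$ (i,j)"
    then show "X\<^sup>T = X" by (intro eq_matI) auto
  qed
  moreover have "X \<in> carrier_mat k k \<Longrightarrow> (\<forall>x\<in>carrier_vec k. 0 \<le> x \<bullet> (X *\<^sub>v x)) \<longleftrightarrow>
     (\<forall>x\<in>carrier_vec k. 0 \<le> (\<Sum>i=0..<k. x $ i * (\<Sum>j=0..<k. X $$ (i,j) * x $ j)))"
    by (auto simp: quad_form)
  ultimately show ?thesis unfolding psd_def by blast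
qed

lemma psd_convex:
  assumes "psd k X" "psd k Y" "Z \<in> carrier_mat k k" "a \<ge> 0" "b \<ge> 0"
    and e: "\<forall>i<k. \<forall>j<k. Z $$ (i,j) = a * X $$ (i,j) + b * Y $$ (i,j)"
  shows "psd k Z"
  unfolding psd_iff
proof (intro conjI allI impI ballI)
  show "Z \<in> carrier_mat k k" by fact
  fix i j assume "i < k" "j < k"
  then show "Z $$ (j, i) = Z $$ (i, j)" using e assms(1,2) unfolding psd_iff by simp
next
  fix x :: "real vec" assume x: "x \<in> carrier_vec k"
  have "(\<Sum>i=0..<k. x $ i * (\<Sum>j=0..<k. Z $$ (i,j) * x $ j)) =
     a * (\<Sum>i=0..<k. x $ i * (\<Sum>j=0..<k. X $$ (i,j) * x $ j)) + b * (\<Sum>i=0..<k. x $ i * (\<Sum>j=0..<k. Y $$ (i,j) * x $ j))"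
    by (simp add: e sum_distrib_left sum.distrib[symmetric] algebra_simps)
  moreover have "0 \<le> (\<Sum>i=0..<k. x $ i * (\<Sum>j=0..<k. X $$ (i,j) * x $ j))"
     "0 \<le> (\<Sum>i=0..<k. x $ i * (\<Sum>j=0..<k. Y $$ (i,j) * x $ j))"
    using assms(1,2) x unfolding psd_iff by auto
  ultimately show "0 \<le> (\<Sum>i=0..<k. x $ i * (\<Sum>j=0..<k. Z $$ (i,j) * x $ j))"
    using assms(4,5) by simp
qed

lemma psd_lim:
  assumes "\<And>r. psd k (X r)" "Z \<in> carrier_mat k k"
    and e: "\<forall>i<k. \<forall>j<k. (\<lambda>r. X r $$ (i,j)) \<longlonglongrightarrow> Z $$ (i,j)"
  shows "psd k Z"
  unfolding psd_iff
proof (intro conjI allI impI ballI)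
  show "Z \<in> carrier_mat k k" by fact
  fix i j assume ij: "i < k" "j < k"
  have "(\<lambda>r. X r $$ (j,i)) \<longlonglongrightarrow> Z $$ (j,i)" using e ij by auto
  moreover have "(\<lambda>r. X r $$ (j,i)) = (\<lambda>r. X r $$ (i,j))"
    using assms(1) ij unfolding psd_iff by auto
  ultimately show "Z $$ (j, i) = Z $$ (i, j)" using e ij LIMSEQ_unique by metis
next
  fix x :: "real vec" assume x: "x \<in> carrier_vec k"
  have "(\<lambda>r. (\<Sum>i=0..<k. x $ i * (\<Sum>j=0..<k. X r $$ (i,j) * x $ j))) \<longlonglongrightarrow> (\<Sum>i=0..<k. x $ i * (\<Sum>j=0..<k. Z $$ (i,j) * x $ j))"
    using e by (intro tendsto_intros) auto
  moreover have "\<forall>r. 0 \<le> (\<Sum>i=0..<k. x $ i * (\<Sum>j=0..<k. X r $$ (i,j) * x $ j))"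
    using assms(1) x unfolding psd_iff by auto
  ultimately show "0 \<le> (\<Sum>i=0..<k. x $ i * (\<Sum>j=0..<k. Z $$ (i,j) * x $ j))"
    by (meson LIMSEQ_le_const)
qed


lemma delta_sum: "i < (N::nat) \<Longrightarrow> (\<Sum>a=0..<N. (if a = i then 1 else 0) * f a) = (f i :: real)"
proof -
  assume i: "i < N"
  have "(\<Sum>a=0..<N. (if a = i then 1 else 0) * f a) = (\<Sum>a=0..<N. if a = i then f a else 0)"
    by (intro sum.cong) auto
  also have "\<dots> = f i" using i by (subst sum.delta) auto
  finally show ?thesis .
qed

lemma delta_sum2: "i < (N::nat) \<Longrightarrow> (\<Sum>a=0..<N. f a * (if a = i then 1 else 0)) = (f i :: real)"
  using delta_sum[of i N f] by (simp add: mult.commute)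

lemma mult_entry: "A \<in> carrier_mat a k \<Longrightarrow> B \<in> carrier_mat k b \<Longrightarrow> i < a \<Longrightarrow> j < b \<Longrightarrow>
  (A * B) $$ (i,j) = (\<Sum>c=0..<k. A $$ (i,c) * B $$ (c,j))"
proof -
  assume A: "A \<in> carrier_mat a k" and B: "B \<in> carrier_mat k b" and i: "i < a" and j: "j < b"
  note dA = carrier_matD[OF A] and dB = carrier_matD[OF B]
  have "(A * B) $$ (i,j) = row A i \<bullet> col B j" using i j dA dB by simp
  also have "\<dots> = (\<Sum>c=0..<k. A $$ (i,c) * B $$ (c,j))"
    unfolding scalar_prod_def using i j dA dB by (intro sum.cong) auto
  finally show ?thesis .
qed

lemma V2_dims[simp]: "dim_row (V2 n m) = n" "dim_col (V2 n m) = m + n"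
  by (simp_all add: V2_def)

lemma V2_carrier: "V2 n m \<in> carrier_mat n (m+n)" by (simp add: carrier_matI)

lemma V2_index: "i < n \<Longrightarrow> j < m + n \<Longrightarrow> V2 n m $$ (i,j) = (if j = i then 1 else 0)"
  by (simp add: V2_def)

lemma V2_mult: assumes "i < n" "X \<in> carrier_mat (m+n) c" "b < c"
  shows "(V2 n m * X) $$ (i,b) = X $$ (i,b)"
proof -
  have "(V2 n m * X) $$ (i,b) = (\<Sum>a=0..<m+n. V2 n m $$ (i,a) * X $$ (a,b))"
    using assms by (intro mult_entry[OF V2_carrier]) auto
  also have "\<dots> = (\<Sum>a=0..<m+n. (if a = i then 1 else 0) * X $$ (a,b))"
    using assms by (intro sum.cong) (auto simp: V2_index)
  also have "\<dots> = X $$ (i,b)" using assms by (intro delta_sum) simp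
  finally show ?thesis .
qed

lemma V2_sandwich: assumes "i < n" "j < n" "X \<in> carrier_mat (m+n) (m+n)"
  shows "(V2 n m * X * (V2 n m)\<^sup>T) $$ (i,j) = X $$ (i,j)"
proof -
  have Y: "V2 n m * X \<in> carrier_mat n (m+n)" using assms V2_carrier by (metis mult_carrier_mat)
  have "(V2 n m * X * (V2 n m)\<^sup>T) $$ (i,j) = (\<Sum>b=0..<m+n. (V2 n m * X) $$ (i,b) * (V2 n m)\<^sup>T $$ (b,j))"
    using assms by (intro mult_entry[OF Y]) (auto simp: V2_carrier)
  also have "\<dots> = (\<Sum>b=0..<m+n. (V2 n m * X) $$ (i,b) * (if b = j then 1 else 0))"
    using assms by (intro sum.cong) (auto simp: V2_index)
  also have "\<dots> = (V2 n m * X) $$ (i,j)" using assms by (intro delta_sum2) simp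
  also have "\<dots> = X $$ (i,j)" using V2_mult[OF assms(1) assms(3)] assms(2) by simp
  finally show ?thesis .
qed

lemma Psi_entry:
  assumes A: "A \<in> carrier_mat n n" and B2: "B2 \<in> carrier_mat n m" and B1: "B1 \<in> carrier_mat n l"
    and W: "W \<in> carrier_mat (m+n) (m+n)" and ij: "i < n" "j < n"
  shows "Psi n m A B2 B1 W $$ (i,j) = - ((\<Sum>c=0..<m+n. Fm n m A B2 $$ (i,c) * W $$ (c,j))
      + (\<Sum>c=0..<m+n. W $$ (i,c) * Fm n m A B2 $$ (j,c)) + Qm n m B1 $$ (i,j))"
proof -
  let ?F = "Fm n m A B2" and ?Q = "Qm n m B1"
  have F: "?F \<in> carrier_mat (m+n) (m+n)" unfolding Fm_def using A
    by (metis add.commute four_block_carrier_mat zero_carrier_mat)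
  have Q: "?Q \<in> carrier_mat (m+n) (m+n)" unfolding Qm_def using B1
    by (metis add.commute four_block_carrier_mat zero_carrier_mat mult_carrier_mat transpose_carrier_mat)
  have FW: "?F * W \<in> carrier_mat (m+n) (m+n)" using F W by simp
  have WF: "W * ?F\<^sup>T \<in> carrier_mat (m+n) (m+n)" using F W by simp
  have X: "?F * W + W * ?F\<^sup>T + ?Q \<in> carrier_mat (m+n) (m+n)" using FW WF Q by simp
  have ijp: "i < m+n" "j < m+n" using ij by auto
  have "Psi n m A B2 B1 W $$ (i,j) = - ((V2 n m * (?F * W + W * ?F\<^sup>T + ?Q) * (V2 n m)\<^sup>T) $$ (i,j))"
    unfolding Psi_def using ij X V2_carrier by (subst index_uminus_mat) auto
  also have "\<dots> = - ((?F * W + W * ?F\<^sup>T + ?Q) $$ (i,j))"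
    using V2_sandwich[OF ij X] by simp
  also have "\<dots> = - ((?F * W) $$ (i,j) + (W * ?F\<^sup>T) $$ (i,j) + ?Q $$ (i,j))"
    using FW WF Q ijp by simp
  also have "(?F * W) $$ (i,j) = (\<Sum>c=0..<m+n. ?F $$ (i,c) * W $$ (c,j))"
    using mult_entry[OF F W ijp] .
  also have "(W * ?F\<^sup>T) $$ (i,j) = (\<Sum>c=0..<m+n. W $$ (i,c) * ?F $$ (j,c))"
    using mult_entry[OF W _ ijp, of "?F\<^sup>T"] F ijp
    by (auto intro!: sum.cong)
  finally show ?thesis .
qed


lemma sum_comb: fixes W W1 W2 F :: "real mat" shows "(\<forall>c<k. W $$ (c,j) = a * W1 $$ (c,j) + b * W2 $$ (c,j)) \<Longrightarrow>
   (\<Sum>c=0..<k. F $$ (i,c) * W $$ (c,j)) = a * (\<Sum>c=0..<k. F $$ (i,c) * W1 $$ (c,j)) + b * (\<Sum>c=0..<k. F $$ (i,c) * W2 $$ (c,j))"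
proof -
  assume e: "\<forall>c<k. W $$ (c,j) = a * W1 $$ (c,j) + b * W2 $$ (c,j)"
  have "(\<Sum>c=0..<k. F $$ (i,c) * W $$ (c,j)) = (\<Sum>c=0..<k. a * (F $$ (i,c) * W1 $$ (c,j)) + b * (F $$ (i,c) * W2 $$ (c,j)))"
    using e by (intro sum.cong) (auto simp: algebra_simps)
  also have "\<dots> = a * (\<Sum>c=0..<k. F $$ (i,c) * W1 $$ (c,j)) + b * (\<Sum>c=0..<k. F $$ (i,c) * W2 $$ (c,j))"
    by (simp add: sum.distrib sum_distrib_left)
  finally show ?thesis .
qed

lemma sum_comb2: fixes W W1 W2 F :: "real mat" shows "(\<forall>c<k. W $$ (i,c) = a * W1 $$ (i,c) + b * W2 $$ (i,c)) \<Longrightarrow>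
   (\<Sum>c=0..<k. W $$ (i,c) * F $$ (j,c)) = a * (\<Sum>c=0..<k. W1 $$ (i,c) * F $$ (j,c)) + b * (\<Sum>c=0..<k. W2 $$ (i,c) * F $$ (j,c))"
proof -
  assume e: "\<forall>c<k. W $$ (i,c) = a * W1 $$ (i,c) + b * W2 $$ (i,c)"
  have "(\<Sum>c=0..<k. W $$ (i,c) * F $$ (j,c)) = (\<Sum>c=0..<k. a * (W1 $$ (i,c) * F $$ (j,c)) + b * (W2 $$ (i,c) * F $$ (j,c)))"
    using e by (intro sum.cong) (auto simp: algebra_simps)
  also have "\<dots> = a * (\<Sum>c=0..<k. W1 $$ (i,c) * F $$ (j,c)) + b * (\<Sum>c=0..<k. W2 $$ (i,c) * F $$ (j,c))"
    by (simp add: sum.distrib sum_distrib_left)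
  finally show ?thesis .
qed

lemma good_convex:
  assumes AB: "\<forall>i\<in>{1..M}. A i \<in> carrier_mat n n \<and> B2 i \<in> carrier_mat n m" and B1: "B1 \<in> carrier_mat n l"
    and g: "good n m M A B2 B1 W1" "good n m M A B2 B1 W2"
    and c: "W1 \<in> carrier_mat (m+n) (m+n)" "W2 \<in> carrier_mat (m+n) (m+n)" "W \<in> carrier_mat (m+n) (m+n)"
    and t: "0 \<le> t" "t \<le> 1"
    and e: "\<forall>i<m+n. \<forall>j<m+n. W $$ (i,j) = (1-t) * W1 $$ (i,j) + t * W2 $$ (i,j)"
  shows "good n m M A B2 B1 W"
  unfolding good_def
proof (intro conjI ballI allI impI)
  have p1: "psd (m+n) W1" and p2: "psd (m+n) W2" using g unfolding good_def by auto
  show "psd (m + n) W" using psd_convex[OF p1 p2 c(3), of "1-t" t] t e by simp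
next
  fix idx assume idx: "idx \<in> {1..M}"
  have A: "A idx \<in> carrier_mat n n" and B2: "B2 idx \<in> carrier_mat n m" using AB idx by auto
  show "psd n (Psi n m (A idx) (B2 idx) B1 W)"
  proof (rule psd_convex[of _ "Psi n m (A idx) (B2 idx) B1 W1" "Psi n m (A idx) (B2 idx) B1 W2" _ "1-t" t])
    show "psd n (Psi n m (A idx) (B2 idx) B1 W1)" "psd n (Psi n m (A idx) (B2 idx) B1 W2)"
      using g idx unfolding good_def by auto
    show "Psi n m (A idx) (B2 idx) B1 W \<in> carrier_mat n n" by (rule Psi_carrier)
    show "0 \<le> 1 - t" "0 \<le> t" using t by auto
    show "\<forall>i<n. \<forall>j<n. Psi n m (A idx) (B2 idx) B1 W $$ (i, j) =
        (1 - t) * Psi n m (A idx) (B2 idx) B1 W1 $$ (i, j) + t * Psi n m (A idx) (B2 idx) B1 W2 $$ (i, j)"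
    proof (intro allI impI)
      fix i j assume ij: "i < n" "j < n"
      let ?F = "Fm n m (A idx) (B2 idx)" and ?Q = "Qm n m B1"
      have e1: "\<forall>c<m+n. W $$ (c,j) = (1-t) * W1 $$ (c,j) + t * W2 $$ (c,j)" using e ij by auto
      have e2: "\<forall>c<m+n. W $$ (i,c) = (1-t) * W1 $$ (i,c) + t * W2 $$ (i,c)" using e ij by auto
      show "Psi n m (A idx) (B2 idx) B1 W $$ (i, j) =
        (1 - t) * Psi n m (A idx) (B2 idx) B1 W1 $$ (i, j) + t * Psi n m (A idx) (B2 idx) B1 W2 $$ (i, j)"
        unfolding Psi_entry[OF A B2 B1 c(3) ij] Psi_entry[OF A B2 B1 c(1) ij] Psi_entry[OF A B2 B1 c(2) ij]
          sum_comb[OF e1, of ?F i] sum_comb2[OF e2, of ?F j]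
        by (simp add: algebra_simps)
    qed
  qed
next
  fix i j assume "i < j \<and> j < n"
  then show "W $$ (i, j) = 0" using e g unfolding good_def by auto
qed

lemma good_closed:
  assumes AB: "\<forall>i\<in>{1..M}. A i \<in> carrier_mat n n \<and> B2 i \<in> carrier_mat n m" and B1: "B1 \<in> carrier_mat n l"
    and g: "\<And>r. good n m M A B2 B1 (Ws r)"
    and c: "\<And>r. Ws r \<in> carrier_mat (m+n) (m+n)" "W \<in> carrier_mat (m+n) (m+n)"
    and e: "\<forall>i<m+n. \<forall>j<m+n. (\<lambda>r. Ws r $$ (i,j)) \<longlonglongrightarrow> W $$ (i,j)"
  shows "good n m M A B2 B1 W"
  unfolding good_def
proof (intro conjI ballI allI impI)
  have p1: "psd (m+n) (Ws r)" for r using g unfolding good_def by auto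
  show "psd (m + n) W" using psd_lim[of "m+n" Ws, OF p1 c(2)] e by simp
next
  fix idx assume idx: "idx \<in> {1..M}"
  have A: "A idx \<in> carrier_mat n n" and B2: "B2 idx \<in> carrier_mat n m" using AB idx by auto
  show "psd n (Psi n m (A idx) (B2 idx) B1 W)"
  proof (rule psd_lim[of _ "\<lambda>r. Psi n m (A idx) (B2 idx) B1 (Ws r)"])
    show "psd n (Psi n m (A idx) (B2 idx) B1 (Ws r))" for r
      using g idx unfolding good_def by auto
    show "Psi n m (A idx) (B2 idx) B1 W \<in> carrier_mat n n" by (rule Psi_carrier)
    show "\<forall>i<n. \<forall>j<n. (\<lambda>r. Psi n m (A idx) (B2 idx) B1 (Ws r) $$ (i, j)) \<longlonglongrightarrow> Psi n m (A idx) (B2 idx) B1 W $$ (i, j)"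
    proof (intro allI impI)
      fix i j assume ij: "i < n" "j < n"
      let ?F = "Fm n m (A idx) (B2 idx)" and ?Q = "Qm n m B1"
      have ec: "\<forall>c\<in>{0..<m+n}. (\<lambda>r. Ws r $$ (c,j)) \<longlonglongrightarrow> W $$ (c,j)" using e ij by auto
      have er: "\<forall>c\<in>{0..<m+n}. (\<lambda>r. Ws r $$ (i,c)) \<longlonglongrightarrow> W $$ (i,c)" using e ij by auto
      have t1: "(\<lambda>r. \<Sum>c=0..<m+n. ?F $$ (i,c) * Ws r $$ (c,j)) \<longlonglongrightarrow> (\<Sum>c=0..<m+n. ?F $$ (i,c) * W $$ (c,j))"
        by (rule tendsto_sum, rule tendsto_mult[OF tendsto_const]) (use ec in blast)
      have t2: "(\<lambda>r. \<Sum>c=0..<m+n. Ws r $$ (i,c) * ?F $$ (j,c)) \<longlonglongrightarrow> (\<Sum>c=0..<m+n. W $$ (i,c) * ?F $$ (j,c))"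
        by (rule tendsto_sum, rule tendsto_mult[OF _ tendsto_const]) (use er in blast)
      have t3: "(\<lambda>r. - ((\<Sum>c=0..<m+n. ?F $$ (i,c) * Ws r $$ (c,j)) + (\<Sum>c=0..<m+n. Ws r $$ (i,c) * ?F $$ (j,c)) + ?Q $$ (i,j)))
         \<longlonglongrightarrow> - ((\<Sum>c=0..<m+n. ?F $$ (i,c) * W $$ (c,j)) + (\<Sum>c=0..<m+n. W $$ (i,c) * ?F $$ (j,c)) + ?Q $$ (i,j))"
        by (intro tendsto_minus tendsto_add t1 t2 tendsto_const)
      have eq1: "(\<lambda>r. Psi n m (A idx) (B2 idx) B1 (Ws r) $$ (i, j)) = (\<lambda>r. - ((\<Sum>c=0..<m+n. ?F $$ (i,c) * Ws r $$ (c,j)) + (\<Sum>c=0..<m+n. Ws r $$ (i,c) * ?F $$ (j,c)) + ?Q $$ (i,j)))"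
        using Psi_entry[OF A B2 B1 c(1) ij] by blast
      show "(\<lambda>r. Psi n m (A idx) (B2 idx) B1 (Ws r) $$ (i, j)) \<longlonglongrightarrow> Psi n m (A idx) (B2 idx) B1 W $$ (i, j)"
        unfolding eq1 Psi_entry[OF A B2 B1 c(2) ij] by (rule t3)
    qed
  qed
next
  fix i j assume ij: "i < j \<and> j < n"
  then have "(\<lambda>r. Ws r $$ (i,j)) \<longlonglongrightarrow> W $$ (i,j)" using e by auto
  moreover have "(\<lambda>r. Ws r $$ (i,j)) = (\<lambda>r. 0)" using g ij unfolding good_def by auto
  ultimately show "W $$ (i, j) = 0" using LIMSEQ_unique tendsto_const by metis
qed

lemma X1_convex:
  assumes AB: "\<forall>i\<in>{1..M}. A i \<in> carrier_mat n n \<and> B2 i \<in> carrier_mat n m" and B1: "B1 \<in> carrier_mat n l"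
    and w: "w1 \<in> X1 n m M A B2 B1" "w2 \<in> X1 n m M A B2 B1" and t: "0 \<le> t" "t \<le> 1"
  shows "(1-t) \<cdot>\<^sub>v w1 + t \<cdot>\<^sub>v w2 \<in> X1 n m M A B2 B1"
proof -
  let ?p = "m+n"
  have c1: "w1 \<in> carrier_vec (?p*?p)" and c2: "w2 \<in> carrier_vec (?p*?p)" using w X1_iff by auto
  have c: "(1-t) \<cdot>\<^sub>v w1 + t \<cdot>\<^sub>v w2 \<in> carrier_vec (?p*?p)" using c1 c2 by simp
  have "good n m M A B2 B1 (unvec ?p ((1-t) \<cdot>\<^sub>v w1 + t \<cdot>\<^sub>v w2))"
  proof (rule good_convex[OF AB B1 _ _ _ _ _ t])
    show "good n m M A B2 B1 (unvec ?p w1)" "good n m M A B2 B1 (unvec ?p w2)" using w X1_iff by auto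
    show "\<forall>i<?p. \<forall>j<?p. unvec ?p ((1-t) \<cdot>\<^sub>v w1 + t \<cdot>\<^sub>v w2) $$ (i,j) = (1-t) * unvec ?p w1 $$ (i,j) + t * unvec ?p w2 $$ (i,j)"
      using c1 c2 idx_lt by auto
    show "unvec ?p w1 \<in> carrier_mat ?p ?p" "unvec ?p w2 \<in> carrier_mat ?p ?p"
      "unvec ?p ((1-t) \<cdot>\<^sub>v w1 + t \<cdot>\<^sub>v w2) \<in> carrier_mat ?p ?p" by simp_all
  qed
  then show ?thesis using c X1_iff by blast
qed

lemma X1_closed:
  assumes AB: "\<forall>i\<in>{1..M}. A i \<in> carrier_mat n n \<and> B2 i \<in> carrier_mat n m" and B1: "B1 \<in> carrier_mat n l"
    and ws: "\<And>r. ws r \<in> X1 n m M A B2 B1" and w: "w \<in> carrier_vec ((m+n)*(m+n))"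
    and e: "\<forall>k<(m+n)*(m+n). (\<lambda>r. ws r $ k) \<longlonglongrightarrow> w $ k"
  shows "w \<in> X1 n m M A B2 B1"
proof -
  let ?p = "m+n"
  have "good n m M A B2 B1 (unvec ?p w)"
  proof (rule good_closed[OF AB B1, of "\<lambda>r. unvec ?p (ws r)"])
    show "good n m M A B2 B1 (unvec ?p (ws r))" for r using ws X1_iff by auto
    show "\<forall>i<?p. \<forall>j<?p. (\<lambda>r. unvec ?p (ws r) $$ (i,j)) \<longlonglongrightarrow> unvec ?p w $$ (i,j)"
      using e idx_lt by auto
    show "unvec ?p (ws r) \<in> carrier_mat ?p ?p" for r by simp
    show "unvec ?p w \<in> carrier_mat ?p ?p" by simp
  qed
  then show ?thesis using w X1_iff by blast
qed



lemma dot_formula: fixes w b :: "real vec" shows "w \<in> carrier_vec N \<Longrightarrow> b \<bullet> w = (\<Sum>k=0..<N. b $ k * w $ k)"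
  unfolding scalar_prod_def by simp

lemma J_formula: fixes P :: "real mat" and w y :: "real vec" assumes P: "P \<in> carrier_mat K N" and w: "w \<in> carrier_vec N"
  shows "y \<bullet> vabs (P *\<^sub>v w) = (\<Sum>i=0..<K. y $ i * \<bar>\<Sum>k=0..<N. P $$ (i,k) * w $ k\<bar>)"
proof -
  have d: "dim_vec (vabs (P *\<^sub>v w)) = K" using P by (simp add: vabs_def)
  show ?thesis unfolding scalar_prod_def d
  proof (intro sum.cong refl)
    fix i assume i: "i \<in> {0..<K}"
    have "vabs (P *\<^sub>v w) $ i = \<bar>(P *\<^sub>v w) $ i\<bar>" using P i by (simp add: vabs_def)
    also have "(P *\<^sub>v w) $ i = row P i \<bullet> w" using P i by simp
    also have "\<dots> = (\<Sum>k=0..<N. P $$ (i,k) * w $ k)" unfolding scalar_prod_def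
      using P w i by (intro sum.cong) auto
    finally show "y $ i * vabs (P *\<^sub>v w) $ i = y $ i * \<bar>\<Sum>k=0..<N. P $$ (i,k) * w $ k\<bar>" by simp
  qed
qed

lemma sq_formula: fixes W w :: "real vec" shows "W \<in> carrier_vec N \<Longrightarrow> w \<in> carrier_vec N \<Longrightarrow>
   (W - w) \<bullet> (W - w) = (\<Sum>k=0..<N. (W $ k - w $ k)^2)"
  unfolding scalar_prod_def by (auto simp: power2_eq_square intro!: sum.cong)

lemma dot_conv: fixes f :: "nat \<Rightarrow> real vec" and a b :: "real vec" assumes "\<And>r. f r \<in> carrier_vec N" "a \<in> carrier_vec N"
  and "\<forall>k<N. (\<lambda>r. f r $ k) \<longlonglongrightarrow> a $ k"
  shows "(\<lambda>r. b \<bullet> f r) \<longlonglongrightarrow> b \<bullet> a"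
proof -
  have "(\<lambda>r. \<Sum>k=0..<N. b $ k * f r $ k) \<longlonglongrightarrow> (\<Sum>k=0..<N. b $ k * a $ k)"
    using assms(3) by (intro tendsto_sum tendsto_mult tendsto_const) auto
  then show ?thesis using dot_formula[OF assms(1)] dot_formula[OF assms(2)] by simp
qed

lemma J_conv: fixes f g :: "nat \<Rightarrow> real vec" and a b :: "real vec" and P :: "real mat" assumes P: "P \<in> carrier_mat K N" and "\<And>r. f r \<in> carrier_vec N" "a \<in> carrier_vec N"
  and "\<forall>k<N. (\<lambda>r. f r $ k) \<longlonglongrightarrow> a $ k" and "\<forall>i<K. (\<lambda>r. g r $ i) \<longlonglongrightarrow> b $ i"
  shows "(\<lambda>r. g r \<bullet> vabs (P *\<^sub>v f r)) \<longlonglongrightarrow> b \<bullet> vabs (P *\<^sub>v a)"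
proof -
  have "(\<lambda>r. \<Sum>i=0..<K. g r $ i * \<bar>\<Sum>k=0..<N. P $$ (i,k) * f r $ k\<bar>) \<longlonglongrightarrow>
      (\<Sum>i=0..<K. b $ i * \<bar>\<Sum>k=0..<N. P $$ (i,k) * a $ k\<bar>)"
  proof (rule tendsto_sum)
    fix i assume i: "i \<in> {0..<K}"
    have "(\<lambda>r. \<Sum>k=0..<N. P $$ (i,k) * f r $ k) \<longlonglongrightarrow> (\<Sum>k=0..<N. P $$ (i,k) * a $ k)"
      using assms(4) by (intro tendsto_sum tendsto_mult tendsto_const) auto
    then show "(\<lambda>r. g r $ i * \<bar>\<Sum>k=0..<N. P $$ (i,k) * f r $ k\<bar>) \<longlonglongrightarrow> b $ i * \<bar>\<Sum>k=0..<N. P $$ (i,k) * a $ k\<bar>"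
      using assms(5) i by (intro tendsto_mult tendsto_rabs) auto
  qed
  then show ?thesis using J_formula[OF P assms(2)] J_formula[OF P assms(3)] by simp
qed

lemma sq_conv: fixes f :: "nat \<Rightarrow> real vec" and a W :: "real vec" assumes "\<And>r. f r \<in> carrier_vec N" "a \<in> carrier_vec N" "W \<in> carrier_vec N"
  and "\<forall>k<N. (\<lambda>r. f r $ k) \<longlonglongrightarrow> a $ k"
  shows "(\<lambda>r. (W - f r) \<bullet> (W - f r)) \<longlonglongrightarrow> (W - a) \<bullet> (W - a)"
proof -
  have "(\<lambda>r. \<Sum>k=0..<N. (W $ k - f r $ k)^2) \<longlonglongrightarrow> (\<Sum>k=0..<N. (W $ k - a $ k)^2)"
    using assms(4) by (intro tendsto_sum tendsto_power tendsto_diff tendsto_const) auto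
  then show ?thesis using sq_formula[OF assms(3) assms(1)] sq_formula[OF assms(3) assms(2)] by simp
qed

lemma sq_nonneg: "(v::real vec) \<bullet> v \<ge> 0"
  unfolding scalar_prod_def by (intro sum_nonneg) auto

lemma coord_sq_le: fixes W w :: "real vec" assumes "W \<in> carrier_vec N" "w \<in> carrier_vec N" "k < N"
  shows "(W $ k - w $ k)^2 \<le> (W - w) \<bullet> (W - w)"
proof -
  have "(W $ k - w $ k)^2 \<le> (\<Sum>j=0..<N. (W $ j - w $ j)^2)"
    using assms(3) by (intro member_le_sum) auto
  then show ?thesis using sq_formula[OF assms(1,2)] by simp
qed

lemma tendsto_if_both: assumes "(f \<longlongrightarrow> (L::real)) F" "(g \<longlongrightarrow> L) F"
  shows "((\<lambda>j. if Q j then f j else g j) \<longlongrightarrow> L) F"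
proof (rule tendstoI)
  fix e :: real assume e: "0 < e"
  have "\<forall>\<^sub>F j in F. dist (f j) L < e" "\<forall>\<^sub>F j in F. dist (g j) L < e"
    using assms e tendstoD by blast+
  then show "\<forall>\<^sub>F j in F. dist (if Q j then f j else g j) L < e"
    by (rule eventually_elim2) auto
qed

lemma J_nonneg: fixes P :: "real mat" and w y :: "real vec" assumes P: "P \<in> carrier_mat K N" and w: "w \<in> carrier_vec N"
  and y: "\<forall>i<K. 0 \<le> y $ i" shows "0 \<le> y \<bullet> vabs (P *\<^sub>v w)"
  unfolding J_formula[OF P w] using y by (intro sum_nonneg) auto

lemma comb_index: fixes w1 w2 :: "real vec" shows "w1 \<in> carrier_vec N \<Longrightarrow> w2 \<in> carrier_vec N \<Longrightarrow> k < N \<Longrightarrow>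
   ((1-t) \<cdot>\<^sub>v w1 + t \<cdot>\<^sub>v w2) $ k = (1-t) * w1 $ k + t * w2 $ k"
  by simp

lemma comb_carrier: fixes w1 w2 :: "real vec" shows "w1 \<in> carrier_vec N \<Longrightarrow> w2 \<in> carrier_vec N \<Longrightarrow> (1-t) \<cdot>\<^sub>v w1 + t \<cdot>\<^sub>v w2 \<in> carrier_vec N"
  by simp

lemma dot_comb: fixes w1 w2 b :: "real vec" assumes "w1 \<in> carrier_vec N" "w2 \<in> carrier_vec N"
  shows "b \<bullet> ((1-t) \<cdot>\<^sub>v w1 + t \<cdot>\<^sub>v w2) = (1-t) * (b \<bullet> w1) + t * (b \<bullet> w2)"
proof -
  have "b \<bullet> ((1-t) \<cdot>\<^sub>v w1 + t \<cdot>\<^sub>v w2) = (\<Sum>k=0..<N. (1-t) * (b $ k * w1 $ k) + t * (b $ k * w2 $ k))"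
    unfolding dot_formula[OF comb_carrier[OF assms]] using assms
    by (intro sum.cong) (auto simp: algebra_simps)
  also have "\<dots> = (1-t) * (b \<bullet> w1) + t * (b \<bullet> w2)"
    unfolding dot_formula[OF assms(1)] dot_formula[OF assms(2)]
    by (simp add: sum.distrib sum_distrib_left)
  finally show ?thesis .
qed

lemma J_comb: fixes P :: "real mat" and w1 w2 y :: "real vec" assumes P: "P \<in> carrier_mat K N" and w: "w1 \<in> carrier_vec N" "w2 \<in> carrier_vec N"
  and y: "\<forall>i<K. 0 \<le> y $ i" and t: "0 \<le> t" "t \<le> 1"
  shows "y \<bullet> vabs (P *\<^sub>v ((1-t) \<cdot>\<^sub>v w1 + t \<cdot>\<^sub>v w2)) \<le> (1-t) * (y \<bullet> vabs (P *\<^sub>v w1)) + t * (y \<bullet> vabs (P *\<^sub>v w2))"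
proof -
  have "y \<bullet> vabs (P *\<^sub>v ((1-t) \<cdot>\<^sub>v w1 + t \<cdot>\<^sub>v w2)) =
     (\<Sum>i=0..<K. y $ i * \<bar>(1-t) * (\<Sum>k=0..<N. P $$ (i,k) * w1 $ k) + t * (\<Sum>k=0..<N. P $$ (i,k) * w2 $ k)\<bar>)"
    unfolding J_formula[OF P comb_carrier[OF w]]
  proof -
    have inner: "(\<Sum>k=0..<N. P $$ (i,k) * ((1-t) \<cdot>\<^sub>v w1 + t \<cdot>\<^sub>v w2) $ k) = (1-t) * (\<Sum>k=0..<N. P $$ (i,k) * w1 $ k) + t * (\<Sum>k=0..<N. P $$ (i,k) * w2 $ k)" for i
    proof -
      have "(\<Sum>k=0..<N. P $$ (i,k) * ((1-t) \<cdot>\<^sub>v w1 + t \<cdot>\<^sub>v w2) $ k) = (\<Sum>k=0..<N. (1-t) * (P $$ (i,k) * w1 $ k) + t * (P $$ (i,k) * w2 $ k))"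
        using w by (intro sum.cong) (auto simp: algebra_simps)
      then show ?thesis by (simp add: sum.distrib sum_distrib_left)
    qed
    show "(\<Sum>i=0..<K. y $ i * \<bar>\<Sum>k=0..<N. P $$ (i,k) * ((1-t) \<cdot>\<^sub>v w1 + t \<cdot>\<^sub>v w2) $ k\<bar>) =
     (\<Sum>i=0..<K. y $ i * \<bar>(1-t) * (\<Sum>k=0..<N. P $$ (i,k) * w1 $ k) + t * (\<Sum>k=0..<N. P $$ (i,k) * w2 $ k)\<bar>)"
      by (simp only: inner)
  qed
  also have "\<dots> \<le> (\<Sum>i=0..<K. (1-t) * (y $ i * \<bar>\<Sum>k=0..<N. P $$ (i,k) * w1 $ k\<bar>) + t * (y $ i * \<bar>\<Sum>k=0..<N. P $$ (i,k) * w2 $ k\<bar>))"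
  proof (intro sum_mono)
    fix i assume i: "i \<in> {0..<K}"
    let ?a = "\<Sum>k=0..<N. P $$ (i,k) * w1 $ k" and ?b = "\<Sum>k=0..<N. P $$ (i,k) * w2 $ k"
    have "\<bar>(1-t) * ?a + t * ?b\<bar> \<le> (1-t) * \<bar>?a\<bar> + t * \<bar>?b\<bar>"
    proof -
      have "\<bar>(1-t) * ?a + t * ?b\<bar> \<le> \<bar>(1-t) * ?a\<bar> + \<bar>t * ?b\<bar>" by (rule abs_triangle_ineq)
      also have "\<dots> = (1-t) * \<bar>?a\<bar> + t * \<bar>?b\<bar>" using t by (simp add: abs_mult)
      finally show ?thesis .
    qed
    then have "y $ i * \<bar>(1-t) * ?a + t * ?b\<bar> \<le> y $ i * ((1-t) * \<bar>?a\<bar> + t * \<bar>?b\<bar>)"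
      using y i by (intro mult_left_mono) auto
    then show "y $ i * \<bar>(1-t) * ?a + t * ?b\<bar> \<le> (1-t) * (y $ i * \<bar>?a\<bar>) + t * (y $ i * \<bar>?b\<bar>)"
      by (simp add: algebra_simps)
  qed
  also have "\<dots> = (1-t) * (y \<bullet> vabs (P *\<^sub>v w1)) + t * (y \<bullet> vabs (P *\<^sub>v w2))"
    unfolding J_formula[OF P w(1)] J_formula[OF P w(2)]
    by (simp add: sum.distrib sum_distrib_left)
  finally show ?thesis .
qed

lemma sq_comb: fixes z W :: "real vec" assumes "z \<in> carrier_vec N" "W \<in> carrier_vec N"
  shows "((1-t) \<cdot>\<^sub>v z + t \<cdot>\<^sub>v W - z) \<bullet> ((1-t) \<cdot>\<^sub>v z + t \<cdot>\<^sub>v W - z) = t^2 * ((W - z) \<bullet> (W - z))"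
proof -
  have "((1-t) \<cdot>\<^sub>v z + t \<cdot>\<^sub>v W - z) \<bullet> ((1-t) \<cdot>\<^sub>v z + t \<cdot>\<^sub>v W - z) = (\<Sum>k=0..<N. t^2 * (W $ k - z $ k)^2)"
    unfolding sq_formula[OF comb_carrier[OF assms] assms(1)] using assms
    by (intro sum.cong) (auto simp: power2_eq_square algebra_simps)
  also have "\<dots> = t^2 * ((W - z) \<bullet> (W - z))"
    unfolding sq_formula[OF assms(2) assms(1)] by (simp add: sum_distrib_left)
  finally show ?thesis .
qed


lemma descent:
  fixes \<Phi> \<Delta> :: "nat \<Rightarrow> real"
  assumes dec: "\<And>r. r \<ge> 1 \<Longrightarrow> \<Phi> (Suc r) + \<Delta> (Suc r) \<le> \<Phi> r" and nn: "\<And>r. \<Delta> r \<ge> 0"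
    and lb: "\<And>r. r \<ge> 1 \<Longrightarrow> \<exists>s\<ge>r. \<Phi> s \<ge> L"
  shows "\<Delta> \<longlonglongrightarrow> 0"
proof -
  have stp: "r \<ge> 1 \<Longrightarrow> \<Phi> (Suc r) \<le> \<Phi> r" for r using dec[of r] nn[of "Suc r"] by linarith
  have anti: "\<Phi> s \<le> \<Phi> r" if "r \<ge> 1" "r \<le> s" for r s
    using that(2)
  proof (induction s rule: dec_induct)
    case base then show ?case by simp
  next
    case (step k) then show ?case using \<open>r \<ge> 1\<close> stp[of k] by linarith
  qed
  have bnd: "\<Phi> r \<ge> L" if r1: "r \<ge> 1" for r
  proof -
    obtain s where s: "s \<ge> r" "\<Phi> s \<ge> L" using lb[OF r1] by blast
    have "\<Phi> s \<le> \<Phi> r" by (rule anti[OF r1 s(1)])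
    then show ?thesis using s(2) by linarith
  qed
  define \<Psi> where "\<Psi> r = \<Phi> (Suc r)" for r
  have dq: "decseq \<Psi>" unfolding \<Psi>_def by (rule decseq_SucI) (use stp in auto)
  have "\<forall>i. L \<le> \<Psi> i" unfolding \<Psi>_def using bnd by auto
  then obtain Lim where Lim: "\<Psi> \<longlonglongrightarrow> Lim" using decseq_convergent[OF dq] by blast
  have "(\<lambda>r. \<Psi> r - \<Psi> (Suc r)) \<longlonglongrightarrow> Lim - Lim"
    by (intro tendsto_diff Lim) (rule LIMSEQ_Suc[OF Lim])
  then have d0: "(\<lambda>r. \<Psi> r - \<Psi> (Suc r)) \<longlonglongrightarrow> 0" by simp
  have "(\<lambda>r. \<Delta> (r + 2)) \<longlonglongrightarrow> 0"
  proof (rule tendsto_sandwich[OF _ _ tendsto_const d0])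
    show "\<forall>\<^sub>F r in sequentially. 0 \<le> \<Delta> (r + 2)" using nn by (intro always_eventually) blast
    have "\<Delta> (r + 2) \<le> \<Psi> r - \<Psi> (Suc r)" for r
    proof -
      have "\<Phi> (Suc (Suc r)) + \<Delta> (Suc (Suc r)) \<le> \<Phi> (Suc r)" using dec[of "Suc r"] by simp
      moreover have "r + 2 = Suc (Suc r)" by simp
      ultimately show ?thesis unfolding \<Psi>_def by simp
    qed
    then show "\<forall>\<^sub>F r in sequentially. \<Delta> (r + 2) \<le> \<Psi> r - \<Psi> (Suc r)"
      by (intro always_eventually) blast
  qed
  then show ?thesis by (rule LIMSEQ_offset)
qed

lemma prox_remove:
  fixes F q :: "real vec \<Rightarrow> real" and S :: "real vec set"
  assumes conv: "\<And>t. 0 < t \<Longrightarrow> t \<le> 1 \<Longrightarrow> (1-t) \<cdot>\<^sub>v z + t \<cdot>\<^sub>v w \<in> S"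
    and Fconv: "\<And>t. 0 < t \<Longrightarrow> t \<le> 1 \<Longrightarrow> F ((1-t) \<cdot>\<^sub>v z + t \<cdot>\<^sub>v w) \<le> (1-t) * F z + t * F w"
    and prox: "\<And>v. v \<in> S \<Longrightarrow> F z \<le> F v + a * q v"
    and qcomb: "\<And>t. q ((1-t) \<cdot>\<^sub>v z + t \<cdot>\<^sub>v w) = t^2 * q w"
  shows "F z \<le> F w"
proof -
  have key: "F z \<le> F w + a * t * q w" if t: "0 < t" "t \<le> 1" for t
  proof -
    have "F z \<le> F ((1-t) \<cdot>\<^sub>v z + t \<cdot>\<^sub>v w) + a * (t^2 * q w)"
      using prox[OF conv[OF t]] qcomb[of t] by simp
    also have "\<dots> \<le> (1-t) * F z + t * F w + a * (t^2 * q w)" using Fconv[OF t] by simp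
    finally have "t * F z \<le> t * (F w + a * t * q w)" by (simp add: algebra_simps power2_eq_square)
    then show ?thesis using t by simp
  qed
  have "(\<lambda>k. F w + a * (1 / Suc k) * q w) \<longlonglongrightarrow> F w + a * 0 * q w"
    by (intro tendsto_intros) (rule LIMSEQ_inverse_real_of_nat[unfolded inverse_eq_divide])
  moreover have "\<forall>k. F z \<le> F w + a * (1 / Suc k) * q w"
  proof
    fix k
    have "0 < 1 / real (Suc k)" "1 / real (Suc k) \<le> 1" by (auto simp: field_simps)
    then show "F z \<le> F w + a * (1 / Suc k) * q w" using key by blast
  qed
  ultimately show ?thesis by (intro LIMSEQ_le_const) auto
qed

lemma conj_ge0: fixes v :: "real vec"
  shows "0 \<le> conj_fun K (gsig \<sigma>) (-v)"
  unfolding conj_fun_def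
proof (rule SUP_upper2[of "0\<^sub>v K"])
  show "0\<^sub>v K \<in> carrier_vec K" by simp
  have "(-v) \<bullet> 0\<^sub>v K = 0" unfolding scalar_prod_def by simp
  moreover have "gsig \<sigma> (0\<^sub>v K) = 0" unfolding gsig_def fsig_def by simp
  ultimately show "0 \<le> ereal (- v \<bullet> 0\<^sub>v K - gsig \<sigma> (0\<^sub>v K))" by simp
qed

lemma conj_zero_le: "conj_fun K (gsig \<sigma>) (-(0\<^sub>v K)) \<le> ereal K"
  unfolding conj_fun_def
proof (rule SUP_least)
  fix x :: "real vec" assume x: "x \<in> carrier_vec K"
  have "(-(0\<^sub>v K)) \<bullet> x = 0" unfolding scalar_prod_def using x by simp
  moreover have "fsig \<sigma> x \<le> K"
  proof -
    have "fsig \<sigma> x \<le> (\<Sum>l<dim_vec x. 1)" unfolding fsig_def by (intro sum_mono) auto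
    then show ?thesis using x by simp
  qed
  ultimately show "ereal (- 0\<^sub>v K \<bullet> x - gsig \<sigma> x) \<le> ereal K" unfolding gsig_def by simp
qed

lemma conj_lower: "x \<in> carrier_vec K \<Longrightarrow> ereal ((-v) \<bullet> x - gsig \<sigma> x) \<le> conj_fun K (gsig \<sigma>) (-v)"
  unfolding conj_fun_def by (rule SUP_upper)

lemma ereal_div: assumes g: "(\<gamma>::real) > 0" and le: "ereal \<gamma> * X + ereal a \<le> ereal \<gamma> * ereal u + ereal b"
  shows "X \<le> ereal ((\<gamma> * u + b - a) / \<gamma>)"
proof (cases X)
  case (real x)
  then have "\<gamma> * x + a \<le> \<gamma> * u + b" using le by simp
  then have "x \<le> (\<gamma> * u + b - a) / \<gamma>" using g by (simp add: field_simps)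
  then show ?thesis using real by simp
next
  case PInf
  then show ?thesis using le g by simp
next
  case MInf
  then show ?thesis by simp
qed



lemma V1_dims[simp]: "dim_row (V1 n m) = m" "dim_col (V1 n m) = m + n"
  by (simp_all add: V1_def)

lemma Pop_carrier: "Pop n m \<in> carrier_mat (m*n) ((m+n)*(m+n))"
proof (rule carrier_matI)
  show "dim_row (Pop n m) = m * n" unfolding Pop_def kron_def by simp
  show "dim_col (Pop n m) = (m+n) * (m+n)" unfolding Pop_def kron_def by simp
qed

lemma H_split: assumes "w \<in> X1 n m M A B2 B1" "v \<in> nonneg_orthant (m*n)"
  shows "Hhat n m M A B2 B1 C D \<gamma> \<sigma> (w,v) = ereal (vecm (Rm n m C D) \<bullet> w) + ereal \<gamma> * conj_fun (m*n) (gsig \<sigma>) (-v)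
     + ereal (\<gamma> * (v \<bullet> vabs (Pop n m *\<^sub>v w)))"
  unfolding Hhat_def r1_def using assms by simp

lemma H_inf: assumes "w \<notin> X1 n m M A B2 B1 \<or> v \<notin> nonneg_orthant (m*n)"
  shows "Hhat n m M A B2 B1 C D \<gamma> \<sigma> (w,v) = \<infinity>"
  using assms unfolding Hhat_def r1_def by auto

lemma ereal_quot_nonneg: assumes "(x::ereal) \<ge> ereal h" "t > 0" shows "0 \<le> (x - ereal h) / ereal t"
proof (cases x)
  case (real r)
  then show ?thesis using assms by (simp add: divide_ereal_def)
next
  case PInf
  then show ?thesis using assms by (simp add: divide_ereal_def)
next
  case MInf
  then show ?thesis using assms by simp
qed

theorem theorem28:
  fixes n m M l q :: nat
    and A B2 :: "nat \<Rightarrow> real mat"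
    and B1 C D :: "real mat"
    and \<gamma> \<sigma> lam :: real
    and Wt y :: "nat \<Rightarrow> real vec"
    and z :: "real vec \<times> real vec"
  defines "p \<equiv> m + n"
    and "H \<equiv> Hhat n m M A B2 B1 C D \<gamma> \<sigma>"
    and "XX \<equiv> X1 n m M A B2 B1"
    and "Yp \<equiv> nonneg_orthant (m * n)"
    and "P \<equiv> Pop n m"
  assumes "n \<ge> 1" and "m \<ge> 1" and "M \<ge> 1"
    and "\<forall>i\<in>{1..M}. A i \<in> carrier_mat n n \<and> B2 i \<in> carrier_mat n m"
    and "B1 \<in> carrier_mat n l" and "C \<in> carrier_mat q n" and "D \<in> carrier_mat q m"
    and "C\<^sup>T * D = 0\<^sub>m n m"
    and "pd m (D\<^sup>T * D)" and "pd n (B1 * B1\<^sup>T)"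
    and "pd n (C\<^sup>T * C)"
    and "\<gamma> > 0" and "\<sigma> > 0" and "lam > 0"
    and "Wt 0 \<in> XX" and "y 0 \<in> Yp"
    and odd_step: "\<forall>r. r \<ge> 1 \<and> odd r \<longrightarrow>
          Wt r = Wt (r - 1) \<and> y r \<in> Yp \<and>
          (\<forall>v\<in>Yp. ereal \<gamma> * conj_fun (m * n) (gsig \<sigma>) (- y r)
                       + ereal (\<gamma> * (y r \<bullet> vabs (P *\<^sub>v Wt (r - 1))))
                    \<le> ereal \<gamma> * conj_fun (m * n) (gsig \<sigma>) (- v)
                       + ereal (\<gamma> * (v \<bullet> vabs (P *\<^sub>v Wt (r - 1)))))"
    and even_step: "\<forall>r. r \<ge> 1 \<and> even r \<longrightarrow>
          y r = y (r - 1) \<and> Wt r \<in> XX \<and>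
          (\<forall>W\<in>XX. vecm (Rm n m C D) \<bullet> Wt r + \<gamma> * (y (r - 1) \<bullet> vabs (P *\<^sub>v Wt r))
                      + 1 / (2 * lam) * ((Wt r - Wt (r - 1)) \<bullet> (Wt r - Wt (r - 1)))
                   \<le> vecm (Rm n m C D) \<bullet> W + \<gamma> * (y (r - 1) \<bullet> vabs (P *\<^sub>v W))
                      + 1 / (2 * lam) * ((W - Wt (r - 1)) \<bullet> (W - Wt (r - 1))))"
    and cluster: "fst z \<in> carrier_vec (p * p)" "snd z \<in> carrier_vec (m * n)"
      "\<exists>\<phi>. strict_mono \<phi> \<and>
           (\<forall>k<p * p. (\<lambda>r. Wt (\<phi> r) $ k) \<longlonglongrightarrow> fst z $ k) \<and>
           (\<forall>k<m * n. (\<lambda>r. y (\<phi> r) $ k) \<longlonglongrightarrow> snd z $ k)"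
  shows "(\<forall>d1\<in>carrier_vec (p * p). (fst z + d1, snd z) \<in> edom H \<longrightarrow>
             H (fst z + d1, snd z) \<ge> H z)
       \<and> (\<forall>d2\<in>carrier_vec (m * n). (fst z, snd z + d2) \<in> edom H \<longrightarrow>
             H (fst z, snd z + d2) \<ge> H z)
       \<and> (regular_at H (p * p) (m * n) z \<longrightarrow> stationary H (XX \<times> Yp) z)"
proof -
  note p_def = assms(1) and H_def = assms(2) and XX_def = assms(3) and Yp_def = assms(4) and P_def = assms(5)
  have AB: "\<forall>i\<in>{1..M}. A i \<in> carrier_mat n n \<and> B2 i \<in> carrier_mat n m" using assms(9) .
  have B1c: "B1 \<in> carrier_mat n l" using assms(10) .
  have gam: "\<gamma> > 0" using assms(17) .
  have lam: "lam > 0" using assms(19) .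
  have W0: "Wt 0 \<in> XX" using assms(20) .
  have y0: "y 0 \<in> Yp" using assms(21) .
  define N where "N = p * p"
  define K where "K = m * n"
  define c where "c = vecm (Rm n m C D)"
  define J where "J v w = v \<bullet> vabs (P *\<^sub>v w)" for v w
  define cj where "cj v = conj_fun K (gsig \<sigma>) (-v)" for v
  define z1 where "z1 = fst z"
  define z2 where "z2 = snd z"
  have zz: "z = (z1, z2)" unfolding z1_def z2_def by simp
  have Pc: "P \<in> carrier_mat K N" unfolding P_def K_def N_def p_def by (rule Pop_carrier)
  have XXc: "w \<in> carrier_vec N" if "w \<in> XX" for w using that unfolding XX_def N_def p_def X1_iff by blast
  have Ypc: "v \<in> carrier_vec K" "\<forall>i<K. 0 \<le> v $ i" if "v \<in> Yp" for v
    using that unfolding Yp_def K_def nonneg_orthant_def by auto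
  have zero_Yp: "0\<^sub>v K \<in> Yp" unfolding Yp_def K_def nonneg_orthant_def by simp
  have cj_ge0: "0 \<le> cj v" for v unfolding cj_def by (rule conj_ge0)
  have cj0: "cj (0\<^sub>v K) \<le> ereal K" unfolding cj_def by (rule conj_zero_le)
  have z1c: "z1 \<in> carrier_vec N" using cluster(1) unfolding z1_def N_def .
  have z2c: "z2 \<in> carrier_vec K" using cluster(2) unfolding z2_def K_def .
  have Hs: "H (w,v) = ereal (c \<bullet> w) + ereal \<gamma> * cj v + ereal (\<gamma> * J v w)" if "w \<in> XX" "v \<in> Yp" for w v
    using H_split[of w n m M A B2 B1 v] that unfolding H_def XX_def Yp_def c_def cj_def J_def K_def P_def by simp
  have Hi: "H (w,v) = \<infinity>" if "w \<notin> XX \<or> v \<notin> Yp" for w v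
    using H_inf[of w n m M A B2 B1 v] that unfolding H_def XX_def Yp_def by simp
  have odd': "Wt r = Wt (r - 1) \<and> y r \<in> Yp \<and> (\<forall>v\<in>Yp. ereal \<gamma> * cj (y r) + ereal (\<gamma> * J (y r) (Wt (r - 1)))
       \<le> ereal \<gamma> * cj v + ereal (\<gamma> * J v (Wt (r - 1))))" if "r \<ge> 1" "odd r" for r
    using odd_step that unfolding cj_def J_def K_def by blast
  have even': "y r = y (r - 1) \<and> Wt r \<in> XX \<and> (\<forall>W\<in>XX. c \<bullet> Wt r + \<gamma> * J (y (r - 1)) (Wt r)
       + 1 / (2 * lam) * ((Wt r - Wt (r - 1)) \<bullet> (Wt r - Wt (r - 1)))
       \<le> c \<bullet> W + \<gamma> * J (y (r - 1)) W + 1 / (2 * lam) * ((W - Wt (r - 1)) \<bullet> (W - Wt (r - 1))))" if "r \<ge> 1" "even r" for r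
    using even_step that unfolding c_def J_def by blast
  have inv: "Wt r \<in> XX \<and> y r \<in> Yp" for r
  proof (induction r)
    case 0 then show ?case using W0 y0 by simp
  next
    case (Suc r)
    show ?case
    proof (cases "odd (Suc r)")
      case True then show ?thesis using odd'[of "Suc r"] Suc by simp
    next
      case False then show ?thesis using even'[of "Suc r"] Suc by simp
    qed
  qed
  have Wc: "Wt r \<in> carrier_vec N" for r using inv XXc by blast
  have yc: "y r \<in> carrier_vec K" "\<forall>i<K. 0 \<le> y r $ i" for r using inv Ypc by blast+
  have J_nn: "0 \<le> J (y r) w" if "w \<in> carrier_vec N" for r w
    unfolding J_def using J_nonneg[OF Pc that yc(2)] .
  have sq0: "(v - v) \<bullet> (v - v) = 0" if "v \<in> carrier_vec N" for v :: "real vec"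
    using sq_formula[OF that that] by simp
  obtain u0 where u0: "cj (0\<^sub>v K) = ereal u0" using cj0 cj_ge0[of "0\<^sub>v K"]
    by (cases "cj (0\<^sub>v K)") auto
  have cjfin: "\<exists>u. cj (y r) = ereal u" if r1: "r \<ge> 1" for r
  proof -
    have fin_odd: "cj (y s) < \<infinity>" if s1: "s \<ge> 1" "odd s" for s
    proof -
      have "\<forall>v\<in>Yp. ereal \<gamma> * cj (y s) + ereal (\<gamma> * J (y s) (Wt (s - 1))) \<le> ereal \<gamma> * cj v + ereal (\<gamma> * J v (Wt (s - 1)))"
        using odd'[OF s1] by blast
      from bspec[OF this zero_Yp]
      have "ereal \<gamma> * cj (y s) + ereal (\<gamma> * J (y s) (Wt (s - 1))) \<le> ereal \<gamma> * ereal u0 + ereal (\<gamma> * J (0\<^sub>v K) (Wt (s - 1)))"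
        unfolding u0 .
      from ereal_div[OF gam this] show ?thesis by (cases "cj (y s)") auto
    qed
    have "cj (y r) < \<infinity>"
    proof (cases "odd r")
      case True then show ?thesis using fin_odd that by blast
    next
      case False
      obtain k where k: "r = Suc k" using r1 by (cases r) auto
      have ok1: "odd k" using False unfolding k by simp
      then have "k \<noteq> 0" by (metis even_zero)
      then have ok: "odd k" "k \<ge> 1" using ok1 by auto
      have "y r = y (r - 1)" using even'[OF r1] False by blast
      then have "y r = y k" unfolding k by simp
      then show ?thesis using fin_odd[OF ok(2) ok(1)] by simp
    qed
    then show ?thesis using cj_ge0[of "y r"] by (cases "cj (y r)") auto
  qed
  define cr where "cr r = real_of_ereal (cj (y r))" for r
  have cr: "cj (y r) = ereal (cr r)" if "r \<ge> 1" for r using cjfin[OF that] unfolding cr_def by auto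
  have cr_nn: "0 \<le> cr r" for r unfolding cr_def using cj_ge0[of "y r"] by (simp add: real_of_ereal_pos)
  define \<Phi> where "\<Phi> r = c \<bullet> Wt r + \<gamma> * cr r + \<gamma> * J (y r) (Wt r)" for r
  define \<Delta> where "\<Delta> r = 1 / (2 * lam) * ((Wt r - Wt (r - 1)) \<bullet> (Wt r - Wt (r - 1)))" for r
  have \<Delta>_nn: "0 \<le> \<Delta> r" for r unfolding \<Delta>_def using lam sq_nonneg by simp
  have dec: "\<Phi> (Suc r) + \<Delta> (Suc r) \<le> \<Phi> r" if r1: "r \<ge> 1" for r
  proof (cases "odd (Suc r)")
    case True
    have o: "Wt (Suc r) = Wt r" "\<forall>v\<in>Yp. ereal \<gamma> * cj (y (Suc r)) + ereal (\<gamma> * J (y (Suc r)) (Wt r))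
       \<le> ereal \<gamma> * cj v + ereal (\<gamma> * J v (Wt r))" using odd'[of "Suc r"] True by auto
    have "ereal \<gamma> * cj (y (Suc r)) + ereal (\<gamma> * J (y (Suc r)) (Wt r)) \<le> ereal \<gamma> * cj (y r) + ereal (\<gamma> * J (y r) (Wt r))"
      using o(2) inv by blast
    then have "\<gamma> * cr (Suc r) + \<gamma> * J (y (Suc r)) (Wt r) \<le> \<gamma> * cr r + \<gamma> * J (y r) (Wt r)"
      using cr[of "Suc r"] cr[OF r1] by simp
    moreover have "\<Delta> (Suc r) = 0" unfolding \<Delta>_def using o(1) sq0[OF Wc] by simp
    ultimately show ?thesis unfolding \<Phi>_def using o(1) by simp
  next
    case False
    have e: "y (Suc r) = y r" "c \<bullet> Wt (Suc r) + \<gamma> * J (y r) (Wt (Suc r)) + \<Delta> (Suc r)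
       \<le> c \<bullet> Wt r + \<gamma> * J (y r) (Wt r) + 1 / (2 * lam) * ((Wt r - Wt r) \<bullet> (Wt r - Wt r))"
      using even'[of "Suc r"] False inv unfolding \<Delta>_def by auto
    have "cr (Suc r) = cr r" unfolding cr_def using e(1) by simp
    then show ?thesis using e(2) sq0[OF Wc] unfolding \<Phi>_def e(1) by simp
  qed
  have \<Phi>_ge: "\<Phi> r \<ge> c \<bullet> Wt r" for r
    unfolding \<Phi>_def using cr_nn[of r] J_nn[OF Wc, of r r] gam by simp
  obtain \<phi> where \<phi>: "strict_mono \<phi>" "\<forall>k<N. (\<lambda>r. Wt (\<phi> r) $ k) \<longlonglongrightarrow> z1 $ k"
      "\<forall>k<K. (\<lambda>r. y (\<phi> r) $ k) \<longlonglongrightarrow> z2 $ k"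
    using cluster(3) unfolding N_def K_def z1_def z2_def by blast
  define \<psi> where "\<psi> j = \<phi> (j + 2)" for j
  have \<psi>_sm: "strict_mono \<psi>" unfolding \<psi>_def strict_mono_def using \<phi>(1) by (simp add: strict_mono_less)
  have \<psi>_ge: "\<psi> j \<ge> j + 2" for j unfolding \<psi>_def using seq_suble[OF \<phi>(1), of "j+2"] .
  have LW: "(\<lambda>j. Wt (\<psi> j) $ k) \<longlonglongrightarrow> z1 $ k" if "k < N" for k
    unfolding \<psi>_def using LIMSEQ_ignore_initial_segment[OF \<phi>(2)[rule_format, OF that], of 2] .
  have Ly: "(\<lambda>j. y (\<psi> j) $ k) \<longlonglongrightarrow> z2 $ k" if "k < K" for k
    unfolding \<psi>_def using LIMSEQ_ignore_initial_segment[OF \<phi>(3)[rule_format, OF that], of 2] .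
  have cW: "(\<lambda>j. c \<bullet> Wt (\<psi> j)) \<longlonglongrightarrow> c \<bullet> z1"
    by (rule dot_conv[of "\<lambda>j. Wt (\<psi> j)" N z1]) (use Wc z1c LW in auto)
  have "\<forall>\<^sub>F j in sequentially. c \<bullet> z1 - 1 < c \<bullet> Wt (\<psi> j)"
    by (rule order_tendstoD(1)[OF cW]) simp
  then obtain j0 where j0: "\<And>j. j \<ge> j0 \<Longrightarrow> c \<bullet> z1 - 1 < c \<bullet> Wt (\<psi> j)"
    unfolding eventually_sequentially by blast
  have lb: "\<exists>s\<ge>r. \<Phi> s \<ge> c \<bullet> z1 - 1" if "r \<ge> 1" for r
  proof (intro exI conjI)
    show "r \<le> \<psi> (max j0 r)" using \<psi>_ge[of "max j0 r"] by simp
    show "c \<bullet> z1 - 1 \<le> \<Phi> (\<psi> (max j0 r))" using j0[of "max j0 r"] \<Phi>_ge[of "\<psi> (max j0 r)"] by simp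
  qed
  have \<Delta>0: "\<Delta> \<longlonglongrightarrow> 0" by (rule descent[OF dec \<Delta>_nn lb])
  have dW: "(\<lambda>r. Wt (Suc r) $ k - Wt r $ k) \<longlonglongrightarrow> 0" if kN: "k < N" for k
  proof -
    have D1: "(\<lambda>r. \<Delta> (Suc r)) \<longlonglongrightarrow> 0" using LIMSEQ_Suc[OF \<Delta>0] .
    have D2: "(\<lambda>r. 2 * lam * \<Delta> (Suc r)) \<longlonglongrightarrow> 0" using tendsto_mult_right_zero[OF D1, of "2 * lam"] .
    have le: "(Wt (Suc r) $ k - Wt r $ k)^2 \<le> 2 * lam * \<Delta> (Suc r)" for r
      unfolding \<Delta>_def using coord_sq_le[OF Wc Wc kN, of "Suc r" r] lam by simp
    have sq: "(\<lambda>r. (Wt (Suc r) $ k - Wt r $ k)^2) \<longlonglongrightarrow> 0"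
      by (rule tendsto_sandwich[OF _ _ tendsto_const D2]) (use le in auto)
    have "(\<lambda>r. sqrt ((Wt (Suc r) $ k - Wt r $ k)^2)) \<longlonglongrightarrow> sqrt 0"
      by (rule tendsto_real_sqrt[OF sq])
    then have "(\<lambda>r. \<bar>Wt (Suc r) $ k - Wt r $ k\<bar>) \<longlonglongrightarrow> 0" by simp
    then show ?thesis by (simp add: tendsto_rabs_zero_iff)
  qed
  have Lp: "(\<lambda>j. Wt (Suc (\<psi> j)) $ k) \<longlonglongrightarrow> z1 $ k" if kN: "k < N" for k
  proof -
    have "(\<lambda>j. Wt (Suc (\<psi> j)) $ k - Wt (\<psi> j) $ k) \<longlonglongrightarrow> 0"
      using LIMSEQ_subseq_LIMSEQ[OF dW[OF kN] \<psi>_sm] by (simp add: o_def)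
    from tendsto_add[OF LW[OF kN] this] show ?thesis by simp
  qed
  have Lm: "(\<lambda>j. Wt (\<psi> j - 1) $ k) \<longlonglongrightarrow> z1 $ k" if kN: "k < N" for k
  proof -
    have sm: "strict_mono (\<lambda>j. \<psi> j - 1)"
      unfolding strict_mono_def using \<psi>_sm \<psi>_ge
      by (metis add_leD2 diff_less_mono le_trans one_le_numeral strict_mono_less)
    have "(\<lambda>j. Wt (Suc (\<psi> j - 1)) $ k - Wt (\<psi> j - 1) $ k) \<longlonglongrightarrow> 0"
      using LIMSEQ_subseq_LIMSEQ[OF dW[OF kN] sm] by (simp add: o_def)
    moreover have "Suc (\<psi> j - 1) = \<psi> j" for j using \<psi>_ge[of j] by simp
    ultimately have "(\<lambda>j. Wt (\<psi> j) $ k - Wt (\<psi> j - 1) $ k) \<longlonglongrightarrow> 0" by simp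
    from tendsto_diff[OF LW[OF kN] this] show ?thesis by simp
  qed
  have z2nn: "\<forall>i<K. 0 \<le> z2 $ i"
  proof (intro allI impI)
    fix i assume i: "i < K"
    show "0 \<le> z2 $ i" by (rule LIMSEQ_le_const[OF Ly[OF i]]) (use yc(2) i in blast)
  qed
  have z2Y: "z2 \<in> Yp" using z2c z2nn unfolding Yp_def K_def nonneg_orthant_def by blast
  have z1X: "z1 \<in> XX" unfolding XX_def
  proof (rule X1_closed[OF AB B1c, of "\<lambda>j. Wt (\<psi> j)"])
    show "Wt (\<psi> r) \<in> X1 n m M A B2 B1" for r using inv unfolding XX_def by blast
    show "z1 \<in> carrier_vec ((m + n) * (m + n))" using z1c unfolding N_def p_def .
    show "\<forall>k<(m + n) * (m + n). (\<lambda>r. Wt (\<psi> r) $ k) \<longlonglongrightarrow> z1 $ k" using LW unfolding N_def p_def by blast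
  qed
  define F where "F w = c \<bullet> w + \<gamma> * J z2 w" for w
  define e where "e j = (if even (\<psi> j) then \<psi> j else Suc (\<psi> j))" for j
  have e_ge: "e j \<ge> 1" "even (e j)" for j unfolding e_def using \<psi>_ge[of j] by auto
  have ye: "y (e j - 1) = y (\<psi> j)" for j
  proof (cases "even (\<psi> j)")
    case True
    then have "y (\<psi> j) = y (\<psi> j - 1)" using even'[of "\<psi> j"] \<psi>_ge[of j] by auto
    then show ?thesis unfolding e_def using True by simp
  next
    case False then show ?thesis unfolding e_def by simp
  qed
  have LWe: "(\<lambda>j. Wt (e j) $ k) \<longlonglongrightarrow> z1 $ k" if kN: "k < N" for k
  proof -
    have "(\<lambda>j. Wt (e j) $ k) = (\<lambda>j. if even (\<psi> j) then Wt (\<psi> j) $ k else Wt (Suc (\<psi> j)) $ k)"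
      unfolding e_def by auto
    then show ?thesis using tendsto_if_both[OF LW[OF kN] Lp[OF kN]] by simp
  qed
  have LWe1: "(\<lambda>j. Wt (e j - 1) $ k) \<longlonglongrightarrow> z1 $ k" if kN: "k < N" for k
  proof -
    have "(\<lambda>j. Wt (e j - 1) $ k) = (\<lambda>j. if even (\<psi> j) then Wt (\<psi> j - 1) $ k else Wt (\<psi> j) $ k)"
      unfolding e_def by auto
    then show ?thesis using tendsto_if_both[OF Lm[OF kN] LW[OF kN]] by simp
  qed
  have prox: "F z1 \<le> F W + 1 / (2 * lam) * ((W - z1) \<bullet> (W - z1))" if WX: "W \<in> XX" for W
  proof -
    have WcN: "W \<in> carrier_vec N" using XXc[OF WX] .
    have ineq: "c \<bullet> Wt (e j) + \<gamma> * J (y (\<psi> j)) (Wt (e j)) \<le> c \<bullet> W + \<gamma> * J (y (\<psi> j)) W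
        + 1 / (2 * lam) * ((W - Wt (e j - 1)) \<bullet> (W - Wt (e j - 1)))" for j
    proof -
      have "c \<bullet> Wt (e j) + \<gamma> * J (y (e j - 1)) (Wt (e j))
         + 1 / (2 * lam) * ((Wt (e j) - Wt (e j - 1)) \<bullet> (Wt (e j) - Wt (e j - 1)))
         \<le> c \<bullet> W + \<gamma> * J (y (e j - 1)) W + 1 / (2 * lam) * ((W - Wt (e j - 1)) \<bullet> (W - Wt (e j - 1)))"
        using even'[OF e_ge(1) e_ge(2), of j] WX by blast
      moreover have "0 \<le> 1 / (2 * lam) * ((Wt (e j) - Wt (e j - 1)) \<bullet> (Wt (e j) - Wt (e j - 1)))"
        using lam sq_nonneg by simp
      ultimately show ?thesis unfolding ye by linarith
    qed
    have a1: "(\<lambda>j. c \<bullet> Wt (e j)) \<longlonglongrightarrow> c \<bullet> z1"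
      by (rule dot_conv[of "\<lambda>j. Wt (e j)" N z1]) (use Wc z1c LWe in auto)
    have a2: "(\<lambda>j. J (y (\<psi> j)) (Wt (e j))) \<longlonglongrightarrow> J z2 z1" unfolding J_def
      by (rule J_conv[OF Pc, of "\<lambda>j. Wt (e j)" z1 "\<lambda>j. y (\<psi> j)" z2]) (use Wc z1c LWe Ly in auto)
    have t1: "(\<lambda>j. c \<bullet> Wt (e j) + \<gamma> * J (y (\<psi> j)) (Wt (e j))) \<longlonglongrightarrow> c \<bullet> z1 + \<gamma> * J z2 z1"
      by (rule tendsto_add[OF a1 tendsto_mult[OF tendsto_const a2]])
    have t2: "(\<lambda>j. c \<bullet> W + \<gamma> * J (y (\<psi> j)) W + 1 / (2 * lam) * ((W - Wt (e j - 1)) \<bullet> (W - Wt (e j - 1))))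
        \<longlonglongrightarrow> c \<bullet> W + \<gamma> * J z2 W + 1 / (2 * lam) * ((W - z1) \<bullet> (W - z1))"
    proof -
      have b1: "(\<lambda>j. J (y (\<psi> j)) W) \<longlonglongrightarrow> J z2 W" unfolding J_def
        by (rule J_conv[OF Pc, of "\<lambda>j. W" W "\<lambda>j. y (\<psi> j)" z2]) (use WcN Ly in auto)
      have b2: "(\<lambda>j. (W - Wt (e j - 1)) \<bullet> (W - Wt (e j - 1))) \<longlonglongrightarrow> (W - z1) \<bullet> (W - z1)"
        by (rule sq_conv[of "\<lambda>j. Wt (e j - 1)" N z1 W]) (use Wc z1c WcN LWe1 in auto)
      show ?thesis by (rule tendsto_add[OF tendsto_add[OF tendsto_const tendsto_mult[OF tendsto_const b1]] tendsto_mult[OF tendsto_const b2]])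
    qed
    have "c \<bullet> z1 + \<gamma> * J z2 z1 \<le> c \<bullet> W + \<gamma> * J z2 W + 1 / (2 * lam) * ((W - z1) \<bullet> (W - z1))"
      by (rule LIMSEQ_le[OF t1 t2]) (use ineq in blast)
    then show ?thesis unfolding F_def .
  qed
  have blk1: "F z1 \<le> F W" if WX: "W \<in> XX" for W
  proof (rule prox_remove[where S = XX and a = "1 / (2 * lam)" and q = "\<lambda>w. (w - z1) \<bullet> (w - z1)"])
    have WcN: "W \<in> carrier_vec N" using XXc[OF WX] .
    show "(1 - t) \<cdot>\<^sub>v z1 + t \<cdot>\<^sub>v W \<in> XX" if "0 < t" "t \<le> 1" for t
      using X1_convex[OF AB B1c, of z1 W t] z1X WX that unfolding XX_def by simp
    show "F ((1 - t) \<cdot>\<^sub>v z1 + t \<cdot>\<^sub>v W) \<le> (1 - t) * F z1 + t * F W" if t: "0 < t" "t \<le> 1" for t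
    proof -
      have "J z2 ((1 - t) \<cdot>\<^sub>v z1 + t \<cdot>\<^sub>v W) \<le> (1 - t) * J z2 z1 + t * J z2 W"
        unfolding J_def using J_comb[OF Pc z1c WcN z2nn] t by simp
      then have "\<gamma> * J z2 ((1 - t) \<cdot>\<^sub>v z1 + t \<cdot>\<^sub>v W) \<le> \<gamma> * ((1 - t) * J z2 z1 + t * J z2 W)"
        using gam by (intro mult_left_mono) auto
      then show ?thesis unfolding F_def dot_comb[OF z1c WcN] by (simp add: algebra_simps)
    qed
    show "F z1 \<le> F v + 1 / (2 * lam) * ((v - z1) \<bullet> (v - z1))" if "v \<in> XX" for v using prox[OF that] .
    show "((1 - t) \<cdot>\<^sub>v z1 + t \<cdot>\<^sub>v W - z1) \<bullet> ((1 - t) \<cdot>\<^sub>v z1 + t \<cdot>\<^sub>v W - z1) = t^2 * ((W - z1) \<bullet> (W - z1))" for t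
      by (rule sq_comb[OF z1c WcN])
  qed
  define od where "od j = (if even (\<psi> j) then \<psi> j - 1 else \<psi> j)" for j
  have od_ge: "od j \<ge> 1" "odd (od j)" for j unfolding od_def using \<psi>_ge[of j] by auto
  have yo: "y (od j) = y (\<psi> j)" for j
  proof (cases "even (\<psi> j)")
    case True
    then have "y (\<psi> j) = y (\<psi> j - 1)" using even'[of "\<psi> j"] \<psi>_ge[of j] by auto
    then show ?thesis unfolding od_def using True by simp
  next
    case False then show ?thesis unfolding od_def by simp
  qed
  have Wo: "Wt (od j - 1) = Wt (od j)" for j using odd'[OF od_ge] by simp
  have LWo: "(\<lambda>j. Wt (od j) $ k) \<longlonglongrightarrow> z1 $ k" if kN: "k < N" for k
  proof -
    have "(\<lambda>j. Wt (od j) $ k) = (\<lambda>j. if even (\<psi> j) then Wt (\<psi> j - 1) $ k else Wt (\<psi> j) $ k)"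
      unfolding od_def by auto
    then show ?thesis using tendsto_if_both[OF Lm[OF kN] LW[OF kN]] by simp
  qed
  have neg_dot: "(-u) \<bullet> x = - (\<Sum>k=0..<K. u $ k * x $ k)" if "u \<in> carrier_vec K" "x \<in> carrier_vec K" for u x  :: "real vec"
  proof -
    have "(-u) \<bullet> x = (\<Sum>k=0..<K. (-u) $ k * x $ k)" by (rule dot_formula[OF that(2)])
    also have "\<dots> = (\<Sum>k=0..<K. - (u $ k * x $ k))" using that by (intro sum.cong) auto
    finally show ?thesis by (simp add: sum_negf)
  qed
  have blk2: "ereal \<gamma> * cj z2 + ereal (\<gamma> * J z2 z1) \<le> ereal \<gamma> * cj v + ereal (\<gamma> * J v z1)" if vY: "v \<in> Yp" for v
  proof (cases "cj v = \<infinity>")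
    case True then show ?thesis using gam by simp
  next
    case False
    then obtain cv where cv: "cj v = ereal cv" using cj_ge0[of v] by (cases "cj v") auto
    let ?B = "\<lambda>j. (\<gamma> * cv + \<gamma> * J v (Wt (od j)) - \<gamma> * J (y (\<psi> j)) (Wt (od j))) / \<gamma>"
    have cjle: "cj (y (\<psi> j)) \<le> ereal (?B j)" for j
    proof -
      have "ereal \<gamma> * cj (y (od j)) + ereal (\<gamma> * J (y (od j)) (Wt (od j - 1))) \<le> ereal \<gamma> * cj v + ereal (\<gamma> * J v (Wt (od j - 1)))"
        using odd'[OF od_ge, of j] vY by blast
      then have "ereal \<gamma> * cj (y (\<psi> j)) + ereal (\<gamma> * J (y (\<psi> j)) (Wt (od j))) \<le> ereal \<gamma> * ereal cv + ereal (\<gamma> * J v (Wt (od j)))"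
        unfolding yo Wo cv .
      from ereal_div[OF gam this] show ?thesis .
    qed
    let ?Bl = "(\<gamma> * cv + \<gamma> * J v z1 - \<gamma> * J z2 z1) / \<gamma>"
    have Bt: "(\<lambda>j. ?B j) \<longlonglongrightarrow> ?Bl"
    proof -
      have vc: "v \<in> carrier_vec K" using Ypc(1)[OF vY] .
      have c1: "(\<lambda>j. J v (Wt (od j))) \<longlonglongrightarrow> J v z1" unfolding J_def
        by (rule J_conv[OF Pc, of "\<lambda>j. Wt (od j)" z1 "\<lambda>j. v" v]) (use Wc z1c LWo in auto)
      have c2: "(\<lambda>j. J (y (\<psi> j)) (Wt (od j))) \<longlonglongrightarrow> J z2 z1" unfolding J_def
        by (rule J_conv[OF Pc, of "\<lambda>j. Wt (od j)" z1 "\<lambda>j. y (\<psi> j)" z2]) (use Wc z1c LWo Ly in auto)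
      show ?thesis by (rule tendsto_divide[OF tendsto_diff[OF tendsto_add[OF tendsto_const tendsto_mult[OF tendsto_const c1]] tendsto_mult[OF tendsto_const c2]] tendsto_const]) (use gam in simp)
    qed
    have "(-z2) \<bullet> x - gsig \<sigma> x \<le> ?Bl" if xc: "x \<in> carrier_vec K" for x
    proof -
      have le: "(-y (\<psi> j)) \<bullet> x - gsig \<sigma> x \<le> ?B j" for j
        using order.trans[OF conj_lower[OF xc, of "y (\<psi> j)" \<sigma>] cjle[of j, unfolded cj_def]] by simp
      have "(\<lambda>j. (-y (\<psi> j)) \<bullet> x - gsig \<sigma> x) \<longlonglongrightarrow> (-z2) \<bullet> x - gsig \<sigma> x"
      proof -
        have "(\<lambda>j. \<Sum>k=0..<K. y (\<psi> j) $ k * x $ k) \<longlonglongrightarrow> (\<Sum>k=0..<K. z2 $ k * x $ k)"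
          by (rule tendsto_sum, rule tendsto_mult[OF _ tendsto_const]) (use Ly in auto)
        then have "(\<lambda>j. - (\<Sum>k=0..<K. y (\<psi> j) $ k * x $ k) - gsig \<sigma> x) \<longlonglongrightarrow> - (\<Sum>k=0..<K. z2 $ k * x $ k) - gsig \<sigma> x"
          by (intro tendsto_diff tendsto_minus tendsto_const)
        then show ?thesis using neg_dot[OF yc(1) xc] neg_dot[OF z2c xc] by simp
      qed
      from LIMSEQ_le[OF this Bt] le show ?thesis by blast
    qed
    then have "cj z2 \<le> ereal ?Bl" unfolding cj_def conj_fun_def by (intro SUP_least) simp
    then have "ereal \<gamma> * cj z2 \<le> ereal \<gamma> * ereal ?Bl" using gam by (intro ereal_mult_left_mono) auto
    also have "ereal \<gamma> * ereal ?Bl = ereal (\<gamma> * cv + \<gamma> * J v z1 - \<gamma> * J z2 z1)" using gam by simp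
    finally have "ereal \<gamma> * cj z2 + ereal (\<gamma> * J z2 z1) \<le> ereal (\<gamma> * cv + \<gamma> * J v z1 - \<gamma> * J z2 z1) + ereal (\<gamma> * J z2 z1)"
      by (intro add_right_mono)
    then show ?thesis unfolding cv by simp
  qed
  obtain cz where cz: "cj z2 = ereal cz"
  proof -
    have "ereal \<gamma> * cj z2 + ereal (\<gamma> * J z2 z1) \<le> ereal \<gamma> * ereal u0 + ereal (\<gamma> * J (0\<^sub>v K) z1)"
      using blk2[OF zero_Yp] u0 by simp
    from ereal_div[OF gam this] have "cj z2 < \<infinity>" by (cases "cj z2") auto
    then show ?thesis using that cj_ge0[of z2] by (cases "cj z2") auto
  qed
  have Hz: "H z = ereal (c \<bullet> z1 + \<gamma> * cz + \<gamma> * J z2 z1)"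
    using Hs[OF z1X z2Y] cz zz by simp
  have B1: "H (w, z2) \<ge> H z" for w
  proof (cases "w \<in> XX")
    case True
    then have "H (w, z2) = ereal (c \<bullet> w + \<gamma> * cz + \<gamma> * J z2 w)" using Hs[OF True z2Y] cz by simp
    then show ?thesis using Hz blk1[OF True] unfolding F_def by simp
  next
    case False then show ?thesis using Hi by simp
  qed
  have B2: "H (z1, v) \<ge> H z" for v
  proof (cases "v \<in> Yp")
    case True
    have "H z = ereal (c \<bullet> z1) + (ereal \<gamma> * cj z2 + ereal (\<gamma> * J z2 z1))"
      using Hs[OF z1X z2Y] zz by (simp add: add.assoc)
    also have "\<dots> \<le> ereal (c \<bullet> z1) + (ereal \<gamma> * cj v + ereal (\<gamma> * J v z1))"
      using blk2[OF True] by (intro add_left_mono)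
    also have "\<dots> = H (z1, v)" using Hs[OF z1X True] by (simp add: add.assoc)
    finally show ?thesis .
  next
    case False then show ?thesis using Hi by simp
  qed
  have Hzr: "H z = ereal (c \<bullet> z1 + \<gamma> * cz + \<gamma> * J z2 z1)" by (rule Hz)
  have addz2: "z2 + t \<cdot>\<^sub>v 0\<^sub>v (m * n) = z2" for t
    by (rule eq_vecI) (use z2c in \<open>auto simp: K_def\<close>)
  have addz1: "z1 + t \<cdot>\<^sub>v 0\<^sub>v (p * p) = z1" for t
    by (rule eq_vecI) (use z1c in \<open>auto simp: N_def\<close>)
  show ?thesis
  proof (intro conjI ballI impI)
    fix d1 :: "real vec"
    show "H (fst z + d1, snd z) \<ge> H z" using B1[of "fst z + d1"] unfolding z2_def .
  next
    fix d2 :: "real vec"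
    show "H (fst z, snd z + d2) \<ge> H z" using B2[of "snd z + d2"] unfolding z1_def .
  next
    assume reg: "regular_at H (p * p) (m * n) z"
    show "stationary H (XX \<times> Yp) z" unfolding stationary_def
    proof (intro allI impI)
      fix d :: "real vec \<times> real vec"
      assume dd: "(fst z + fst d, snd z + snd d) \<in> XX \<times> Yp"
      obtain d1 d2 where d: "d = (d1, d2)" by (cases d)
      have "fst z + d1 \<in> carrier_vec N" using dd XXc unfolding d by auto
      then have d1c: "d1 \<in> carrier_vec (p * p)" unfolding N_def carrier_vec_def by simp
      have "snd z + d2 \<in> carrier_vec K" using dd Ypc unfolding d by auto
      then have d2c: "d2 \<in> carrier_vec (m * n)" unfolding K_def carrier_vec_def by simp
      have q1: "0 \<le> dir_deriv H z (d1, 0\<^sub>v (m * n))"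
        unfolding dir_deriv_def
      proof (rule Liminf_bounded)
        show "\<forall>\<^sub>F t in at_right 0. 0 \<le> (H (fst z + t \<cdot>\<^sub>v fst (d1, 0\<^sub>v (m * n)), snd z + t \<cdot>\<^sub>v snd (d1, 0\<^sub>v (m * n))) - H z) / ereal t"
        proof (rule eventually_mono[OF eventually_at_right_less[of "0::real"]])
          fix t :: real assume t: "0 < t"
          have "H (fst z + t \<cdot>\<^sub>v d1, z2) \<ge> ereal (c \<bullet> z1 + \<gamma> * cz + \<gamma> * J z2 z1)" using B1 Hzr by simp
          then show "0 \<le> (H (fst z + t \<cdot>\<^sub>v fst (d1, 0\<^sub>v (m * n)), snd z + t \<cdot>\<^sub>v snd (d1, 0\<^sub>v (m * n))) - H z) / ereal t"
            unfolding Hzr using ereal_quot_nonneg[OF _ t] addz2 unfolding z2_def by simp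
        qed
      qed
      have q2: "0 \<le> dir_deriv H z (0\<^sub>v (p * p), d2)"
        unfolding dir_deriv_def
      proof (rule Liminf_bounded)
        show "\<forall>\<^sub>F t in at_right 0. 0 \<le> (H (fst z + t \<cdot>\<^sub>v fst (0\<^sub>v (p * p), d2), snd z + t \<cdot>\<^sub>v snd (0\<^sub>v (p * p), d2)) - H z) / ereal t"
        proof (rule eventually_mono[OF eventually_at_right_less[of "0::real"]])
          fix t :: real assume t: "0 < t"
          have "H (z1, snd z + t \<cdot>\<^sub>v d2) \<ge> ereal (c \<bullet> z1 + \<gamma> * cz + \<gamma> * J z2 z1)" using B2 Hzr by simp
          then show "0 \<le> (H (fst z + t \<cdot>\<^sub>v fst (0\<^sub>v (p * p), d2), snd z + t \<cdot>\<^sub>v snd (0\<^sub>v (p * p), d2)) - H z) / ereal t"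
            unfolding Hzr using ereal_quot_nonneg[OF _ t] addz1 unfolding z1_def by simp
        qed
      qed
      show "0 \<le> dir_deriv H z d"
        using reg d1c d2c q1 q2 unfolding regular_at_def d by blast
    qed
  qed
qed

end
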